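(* Assume the following: - $g$ is a concave distortion function satisfying (A1) and (A2); - $F$ is a distribution function on $\mathbb R$ with mean $0$ and variance $1$; - $\mathcal P\subset\mathbb R^n$ is a polyhedral set such that $\sigma_{\boldsymbol x}>0$ for all $\boldsymbol x\in\mathcal P$; - to each $\boldsymbol x\in\mathcal P$ is associated a tolerance $\varepsilon_{\boldsymbol x}>0$. Let $V=\operatorname{var}(\gamma(U))$, $c_0=\operatorname{corr}(F^{-1}(U),\gamma(U))$ and $\underline{\varepsilon_{\boldsymbol x}}=\min\{\varepsilon_{\boldsymbol x},2\sigma_{\boldsymbol x}^2(1-c_0)\}$. Then for every $\boldsymbol x\in\mathcal P$, $$\sup_{G_{\boldsymbol R}\in\mathcal M(\boldsymbol\mu,\Sigma):\ d_W(F_{\boldsymbol x},G_{\boldsymbol x})\le\sqrt{\varepsilon_{\boldsymbol x}}}H_g(G_{\boldsymbol x})=-\mu_{\boldsymbol x}+\Big(\sigma_{\boldsymbol x}-\frac{\underline{\varepsilon_{\boldsymbol x}}}{2\sigma_{\boldsymbol x}}\Big)\sqrt V c_0+\sqrt{\underline{\varepsilon_{\boldsymbol x}}-\frac{\underline{\varepsilon_{\boldsymbol x}}^2}{4\sigma_{\boldsymbol x}^2}}\,\sqrt{V(1-c_0^2)}.$$ Consequently, the robust portfolio problem $$\min_{\boldsymbol x\in\mathcal P}\ \sup_{G_{\boldsymbol R}\in\mathcal M(\boldsymbol\mu,\Sigma):\ d_W(F_{\boldsymbol x},G_{\boldsymbol x})\le\sqrt{\varepsilon_{\boldsymbol x}}}H_g(G_{\boldsymbol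 x})$$ is equivalent to minimising the right-hand side over $\boldsymbol x\in\mathcal P$.
   Context: Let $(\Omega,\mathcal A,\mathbb P)$ be an atomless probability space and $U\sim\mathcal U(0,1)$. For a distribution function $G$ on $\mathbb R$ with finite second moment, $G^{-1}(u)=\inf\{y:G(y)\ge u\}$. A distortion function is a non-decreasing $g:[0,1]\to[0,1]$ with $g(0)=0$, $g(1)=1$. For absolutely continuous $g$, $\gamma(u)=\partial_-g(x)|_{x=1-u}$ (left derivative), and $H_g(G)=\int_0^1\gamma G^{-1}$. Standing assumptions: - (A1) $g$ is absolutely continuous and $\int_0^1\gamma^2<\infty$; - (A2) $\gamma$ is not a.e. equal to $1$. $d_W(G_1,G_2)=\big(\int_0^1(G_1^{-1}-G_2^{-1})^2\big)^{1/2}$. Portfolio setting: - $\boldsymbol R=(R_1,\dots,R_n)$ is a random vector of returns with multivariate distribution $G_{\boldsymbol R}$. - $\mathcal M(\boldsymbol\mu,\Sigma)$ is the set of all $n$-dimensional distributions with mean vector $\boldsymbol\mu$ and covariance matrix $\Sigma$. - For $\boldsymbol x\in\mathcal P$, $G_{\boldsymbol x}$ is the distribution function of the loss $-\boldsymbol x^\top\boldsymbol R$ under $G_{\boldsymbol R}$. - $\mu_{\boldsymbol x}=\boldsymbol x^\top\boldsymbol\mu$ and $\sigma_{\boldsymbol x}^2=\boldsymbol x^\top\Sigma\boldsymbol x$. - The reference loss distribution $F_{\boldsymbol x}$ has quantile function $F_{\boldsymbol x}^{-1}(u)=-\mu_{\boldsymbol x}+\sigma_{\boldsymbol x}F^{-1}(u)$.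 *)

theory Defs
  imports "HOL-Analysis.Analysis" "HOL-Probability.Probability"
begin

definition quantile :: "(real \<Rightarrow> real) \<Rightarrow> real \<Rightarrow> real" where
  "quantile G u = Inf {y. u \<le> G y}"

definition distortion :: "(real \<Rightarrow> real) \<Rightarrow> bool" where
  "distortion g \<longleftrightarrow> mono_on {0..1} g \<and> g ` {0..1} \<subseteq> {0..1} \<and> g 0 = 0 \<and> g 1 = 1"

definition abs_cont_01 :: "(real \<Rightarrow> real) \<Rightarrow> bool" where
  "abs_cont_01 g \<longleftrightarrow> (\<forall>e>0. \<exists>d>0. \<forall>(n::nat) (a::nat \<Rightarrow> real) (b::nat \<Rightarrow> real).
      (\<forall>k<n. 0 \<le> a k \<and> a k \<le> b k \<and> b k \<le> 1) \<and>
      (\<forall>k<n. \<forall>l<n. k \<noteq> l \<longrightarrow> b k \<le> a l \<or> b l \<le> a k) \<and>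
      (\<Sum>k<n. b k - a k) < d \<longrightarrow> (\<Sum>k<n. \<bar>g (b k) - g (a k)\<bar>) < e)"

definition left_deriv :: "(real \<Rightarrow> real) \<Rightarrow> real \<Rightarrow> real" where
  "left_deriv g x = Lim (at_left x) (\<lambda>t. (g x - g t) / (x - t))"

definition gam :: "(real \<Rightarrow> real) \<Rightarrow> real \<Rightarrow> real" where
  "gam g u = left_deriv g (1 - u)"

definition A1 :: "(real \<Rightarrow> real) \<Rightarrow> bool" where
  "A1 g \<longleftrightarrow> abs_cont_01 g \<and> set_integrable lborel {0<..<1} (\<lambda>u. (gam g u)\<^sup>2)"

definition A2 :: "(real \<Rightarrow> real) \<Rightarrow> bool" where
  "A2 g \<longleftrightarrow> \<not> (AE u in lborel. u \<in> {0<..<1} \<longrightarrow> gam g u = 1)"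

definition Hg :: "(real \<Rightarrow> real) \<Rightarrow> (real \<Rightarrow> real) \<Rightarrow> real" where
  "Hg g G = (LINT u:{0<..<1}|lborel. gam g u * quantile G u)"

definition dWq :: "(real \<Rightarrow> real) \<Rightarrow> (real \<Rightarrow> real) \<Rightarrow> real" where
  "dWq q1 q2 = sqrt (LINT u:{0<..<1}|lborel. (q1 u - q2 u)\<^sup>2)"

definition dW :: "(real \<Rightarrow> real) \<Rightarrow> (real \<Rightarrow> real) \<Rightarrow> real" where
  "dW G1 G2 = dWq (quantile G1) (quantile G2)"

text \<open>Variance / covariance / correlation of f(U), h(U) for U uniform on (0,1).\<close>
definition var01 :: "(real \<Rightarrow> real) \<Rightarrow> real" where
  "var01 f = (LINT u:{0<..<1}|lborel. (f u)\<^sup>2) - (LINT u:{0<..<1}|lborel. f u)\<^sup>2"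

definition cov01 :: "(real \<Rightarrow> real) \<Rightarrow> (real \<Rightarrow> real) \<Rightarrow> real" where
  "cov01 f h = (LINT u:{0<..<1}|lborel. f u * h u)
      - (LINT u:{0<..<1}|lborel. f u) * (LINT u:{0<..<1}|lborel. h u)"

definition corr01 :: "(real \<Rightarrow> real) \<Rightarrow> (real \<Rightarrow> real) \<Rightarrow> real" where
  "corr01 f h = cov01 f h / (sqrt (var01 f) * sqrt (var01 h))"

definition Mset :: "real^'n \<Rightarrow> real^'n^'n \<Rightarrow> (real^'n) measure set" where
  "Mset mu Sig = {M. prob_space M \<and> sets M = sets borel \<and>
      (\<forall>i. integrable M (\<lambda>r. (r $ i)\<^sup>2)) \<and>
      (\<forall>i. (\<integral>r. r $ i \<partial>M) = mu $ i) \<and>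
      (\<forall>i j. (\<integral>r. (r $ i - mu $ i) * (r $ j - mu $ j) \<partial>M) = Sig $ i $ j)}"

definition loss_cdf :: "(real^'n) measure \<Rightarrow> real^'n \<Rightarrow> real \<Rightarrow> real" where
  "loss_cdf GR x = cdf (distr GR borel (\<lambda>r. - (x \<bullet> r)))"

definition mu_x :: "real^'n \<Rightarrow> real^'n \<Rightarrow> real" where
  "mu_x mu x = x \<bullet> mu"

definition sigma_x :: "real^'n^'n \<Rightarrow> real^'n \<Rightarrow> real" where
  "sigma_x Sig x = sqrt (x \<bullet> (Sig *v x))"

definition ref_quantile :: "real measure \<Rightarrow> real^'n \<Rightarrow> real^'n^'n \<Rightarrow> real^'n \<Rightarrow> real \<Rightarrow> real" where
  "ref_quantile MF mu Sig x u = - mu_x mu x + sigma_x Sig x * quantile (cdf MF) u"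

definition robust_risk ::
  "(real \<Rightarrow> real) \<Rightarrow> real measure \<Rightarrow> real^'n \<Rightarrow> real^'n^'n \<Rightarrow> real \<Rightarrow> real^'n \<Rightarrow> ereal" where
  "robust_risk g MF mu Sig eps x =
     (SUP GR \<in> {GR \<in> Mset mu Sig.
          dWq (ref_quantile MF mu Sig x) (quantile (loss_cdf GR x)) \<le> sqrt eps}.
        ereal (Hg g (loss_cdf GR x)))"

end

theory Submission
  imports Defs
begin

lemma sq_integrable_prod:
  fixes a b :: "'a \<Rightarrow> real"
  assumes "a \<in> borel_measurable M" "b \<in> borel_measurable M"
    "integrable M (\<lambda>x. (a x)\<^sup>2)" "integrable M (\<lambda>x. (b x)\<^sup>2)"
  shows "integrable M (\<lambda>x. a x * b x)"
proof (rule Bochner_Integration.integrable_bound[where f="\<lambda>x. (a x)\<^sup>2 + (b x)\<^sup>2"])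
  show "integrable M (\<lambda>x. (a x)\<^sup>2 + (b x)\<^sup>2)" using assms by auto
  show "(\<lambda>x. a x * b x) \<in> borel_measurable M" using assms by auto
  show "AE x in M. norm (a x * b x) \<le> norm ((a x)\<^sup>2 + (b x)\<^sup>2)"
  proof (rule AE_I2)
    fix x
    have "0 \<le> (\<bar>a x\<bar> - \<bar>b x\<bar>)\<^sup>2" by simp
    then have "2 * \<bar>a x * b x\<bar> \<le> (a x)\<^sup>2 + (b x)\<^sup>2"
      by (simp add: power2_eq_square abs_mult algebra_simps)
    then show "norm (a x * b x) \<le> norm ((a x)\<^sup>2 + (b x)\<^sup>2)" by simp
  qed
qed

lemma cauchy_schwarz_int:
  fixes a b :: "'a \<Rightarrow> real"
  assumes "a \<in> borel_measurable M" "b \<in> borel_measurable M"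
    "integrable M (\<lambda>x. (a x)\<^sup>2)" "integrable M (\<lambda>x. (b x)\<^sup>2)"
  shows "(\<integral>x. a x * b x \<partial>M)\<^sup>2 \<le> (\<integral>x. (a x)\<^sup>2 \<partial>M) * (\<integral>x. (b x)\<^sup>2 \<partial>M)"
proof -
  have iab: "integrable M (\<lambda>x. a x * b x)" using sq_integrable_prod assms by blast
  define A where "A = (\<integral>x. (a x)\<^sup>2 \<partial>M)"
  define B where "B = (\<integral>x. (b x)\<^sup>2 \<partial>M)"
  define C where "C = (\<integral>x. a x * b x \<partial>M)"
  have q: "0 \<le> A - 2 * t * C + t\<^sup>2 * B" for t
  proof -
    have "0 \<le> (\<integral>x. (a x - t * b x)\<^sup>2 \<partial>M)" by simp
    also have "(\<integral>x. (a x - t * b x)\<^sup>2 \<partial>M) = (\<integral>x. (a x)\<^sup>2 - 2 * t * (a x * b x) + t\<^sup>2 * (b x)\<^sup>2 \<partial>M)"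
      by (rule Bochner_Integration.integral_cong) (auto simp: power2_eq_square algebra_simps)
    also have "\<dots> = A - 2 * t * C + t\<^sup>2 * B"
      using assms iab by (simp add: A_def B_def C_def)
    finally show ?thesis .
  qed
  have B0: "0 \<le> B" unfolding B_def by simp
  show ?thesis
  proof (cases "B = 0")
    case True
    have "C = 0"
    proof (rule ccontr)
      assume "C \<noteq> 0"
      have "0 \<le> A - 2 * ((A + 1) / (2 * C)) * C" using q[of "(A + 1) / (2 * C)"] True by simp
      then show False using \<open>C \<noteq> 0\<close> by (simp add: field_simps)
    qed
    then show ?thesis using True by (simp add: A_def B_def C_def[symmetric])
  next
    case False
    with B0 have Bp: "B > 0" by simp
    have "0 \<le> A - 2 * (C / B) * C + (C / B)\<^sup>2 * B" using q[of "C / B"] .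
    then have "0 \<le> A * B - C\<^sup>2" using Bp by (simp add: field_simps power2_eq_square)
    then show ?thesis by (simp add: A_def B_def C_def)
  qed
qed

definition M01 :: "real measure" where "M01 = restrict_space lborel {0<..<1}"

lemma space_M01[simp]: "space M01 = {0<..<1}"
  by (simp add: M01_def space_restrict_space)

lemma prob_M01: "prob_space M01"
  unfolding M01_def by (rule prob_space_restrict_space) auto

lemma LINT_M01: "set_lebesgue_integral lborel {0<..<1} h = integral\<^sup>L M01 h"
  for h :: "real \<Rightarrow> real"
  unfolding set_lebesgue_integral_def M01_def
  by (subst integral_restrict_space) auto

lemma set_integrable_M01: "set_integrable lborel {0<..<1} h = integrable M01 h"
  for h :: "real \<Rightarrow> real"
  unfolding M01_def by (subst set_integrable_eq) auto

lemma AE_M01: "(AE x in M01. P x) \<longleftrightarrow> (AE x in lborel. x \<in> {0<..<1} \<longrightarrow> P x)"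
  unfolding M01_def by (rule AE_restrict_space_iff) auto

lemma measurable_M01_mono:
  fixes Y :: "real \<Rightarrow> real"
  assumes "mono_on {0<..<1} Y" shows "Y \<in> borel_measurable M01"
  using borel_measurable_mono_on_fnc[OF assms] unfolding M01_def
  by (simp add: measurable_restrict_space1)

lemma quantile_distr:
  assumes "real_distribution N"
  shows "distr M01 borel (quantile (cdf N)) = N"
    and "quantile (cdf N) \<in> borel_measurable M01"
    and "mono_on {0<..<1} (quantile (cdf N))"
proof -
  interpret cdf_distribution N using assms by (simp add: cdf_distribution_def)
  have q: "quantile (cdf N) = I" by (simp add: quantile_def[abs_def])
  show "distr M01 borel (quantile (cdf N)) = N" unfolding q M01_def
    by (rule distr_I_eq_M)
  show "quantile (cdf N) \<in> borel_measurable M01" unfolding q M01_def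
    using measurable_CI by (simp add: measurable_restrict_space1)
  show "mono_on {0<..<1} (quantile (cdf N))" unfolding q by (rule mono_I)
qed

lemma quantile_integral:
  fixes h :: "real \<Rightarrow> real"
  assumes "real_distribution N" "h \<in> borel_measurable borel"
  shows "integrable M01 (\<lambda>u. h (quantile (cdf N) u)) = integrable N h"
    and "integral\<^sup>L M01 (\<lambda>u. h (quantile (cdf N) u)) = integral\<^sup>L N h"
proof -
  note qd = quantile_distr[OF assms(1)]
  have m: "quantile (cdf N) \<in> measurable M01 borel" using qd(2) by simp
  show "integrable M01 (\<lambda>u. h (quantile (cdf N) u)) = integrable N h"
    using integrable_distr_eq[OF m assms(2)] qd(1) by simp
  show "integral\<^sup>L M01 (\<lambda>u. h (quantile (cdf N) u)) = integral\<^sup>L N h"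
    using integral_distr[OF m assms(2)] qd(1) by simp
qed

lemma measure_M01: "A \<subseteq> {0<..<1} \<Longrightarrow> measure M01 A = measure lborel A"
  unfolding M01_def by (rule measure_restrict_space) auto

lemma cdf_distr_M01:
  fixes Y :: "real \<Rightarrow> real"
  assumes "Y \<in> borel_measurable M01"
  shows "cdf (distr M01 borel Y) y = measure M01 {v\<in>{0<..<1}. Y v \<le> y}"
  unfolding cdf_def using assms
  by (subst measure_distr) (auto intro!: arg_cong[where f="measure M01"])

lemma quantile_mono_fun:
  fixes Y :: "real \<Rightarrow> real"
  assumes mono: "mono_on {0<..<1} Y" and u: "u \<in> {0<..<1}"
    and lc: "(Y \<longlongrightarrow> Y u) (at_left u)"
  shows "quantile (cdf (distr M01 borel Y)) u = Y u"
proof -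
  have Ym: "Y \<in> borel_measurable M01" by (rule measurable_M01_mono[OF mono])
  interpret P: prob_space M01 by (rule prob_M01)
  let ?S = "{y. u \<le> cdf (distr M01 borel Y) y}"
  have setm: "{v\<in>{0<..<1}. Y v \<le> y} \<in> sets M01" for y
  proof -
    have "{v\<in>{0<..<1}. Y v \<le> y} = Y -` {..y} \<inter> space M01" by auto
    also have "\<dots> \<in> sets M01" using Ym by (intro measurable_sets) auto
    finally show ?thesis .
  qed
  have in1: "Y u \<in> ?S"
  proof -
    have "{0<..u} \<subseteq> {v\<in>{0<..<1}. Y v \<le> Y u}"
      using u mono by (auto simp: mono_on_def)
    then have "measure M01 {0<..u} \<le> measure M01 {v\<in>{0<..<1}. Y v \<le> Y u}"
      using setm by (intro P.finite_measure_mono) auto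
    moreover have "measure M01 {0<..u} = u" using u by (subst measure_M01) auto
    ultimately show ?thesis using cdf_distr_M01[OF Ym] by simp
  qed
  have lb: "Y u \<le> y" if "y \<in> ?S" for y
  proof (rule ccontr)
    assume "\<not> Y u \<le> y"
    then have yl: "y < Y u" by simp
    have "eventually (\<lambda>v. y < Y v) (at_left u)" using lc yl by (rule order_tendstoD)
    then obtain b where b: "b < u" "\<And>v. b < v \<Longrightarrow> v < u \<Longrightarrow> y < Y v"
      by (auto simp: eventually_at_left_field)
    define c where "c = max b 0"
    have cu: "c < u" using b u by (auto simp: c_def)
    have sub: "{v\<in>{0<..<1}. Y v \<le> y} \<subseteq> {0<..c}"
    proof
      fix v assume v: "v \<in> {v\<in>{0<..<1}. Y v \<le> y}"
      have "v < u"
      proof (rule ccontr)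
        assume "\<not> v < u"
        then have "Y u \<le> Y v" using mono u v by (auto simp: mono_on_def)
        then show False using v yl by auto
      qed
      moreover have "\<not> (b < v)" using b(2)[of v] v \<open>v < u\<close> by force
      ultimately show "v \<in> {0<..c}" using v by (auto simp: c_def)
    qed
    have "measure M01 {v\<in>{0<..<1}. Y v \<le> y} \<le> measure M01 {0<..c}"
      using sub cu u by (intro P.finite_measure_mono) (auto simp: M01_def sets_restrict_space_iff)
    also have "measure M01 {0<..c} = c" using cu u by (subst measure_M01) (auto simp: c_def)
    finally have "cdf (distr M01 borel Y) y \<le> c" using cdf_distr_M01[OF Ym] by simp
    then show False using that cu by simp
  qed
  show ?thesis unfolding quantile_def
    by (rule cInf_eq_minimum[OF in1 lb])
qed

lemma quantile_mono_fun_AE: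
  fixes Y :: "real \<Rightarrow> real"
  assumes mono: "mono_on {0<..<1} Y"
  shows "AE u in M01. quantile (cdf (distr M01 borel Y)) u = Y u"
proof -
  have ctb: "countable {a\<in>{0<..<1}. \<not> isCont Y a}"
    by (rule mono_on_ctble_discont_open) (auto simp: mono)
  have "AE u in lborel. u \<notin> {a\<in>{0<..<1}. \<not> isCont Y a}"
    by (rule AE_not_in[OF countable_imp_null_set_lborel[OF ctb]])
  then show ?thesis unfolding AE_M01
  proof (rule AE_mp, intro AE_I2 impI)
    fix u assume u: "u \<notin> {a\<in>{0<..<1}. \<not> isCont Y a}" "u \<in> {0<..<1}"
    then have "isCont Y u" by auto
    then have "(Y \<longlongrightarrow> Y u) (at_left u)"
      by (simp add: isCont_def filterlim_at_split)
    then show "quantile (cdf (distr M01 borel Y)) u = Y u"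
      by (rule quantile_mono_fun[OF mono u(2)])
  qed
qed

definition slp :: "(real \<Rightarrow> real) \<Rightarrow> real \<Rightarrow> real \<Rightarrow> real" where
  "slp g a b = (g b - g a) / (b - a)"

lemma slp_sym: "slp g a b = slp g b a"
  unfolding slp_def by (metis minus_diff_eq minus_divide_divide)

lemma concave_slope3:
  assumes "concave_on I g" "x \<in> I" "y \<in> I" "x < t" "t < y"
  shows "slp g x y \<le> slp g x t" and "slp g t y \<le> slp g x y"
proof -
  have cv: "convex_on I (\<lambda>x. - g x)" using assms(1) by (simp add: concave_on_def)
  note l = convex_on_slope_le[OF cv assms(2,3,4,5)]
  have e1: "(- g x - - g t) / (x - t) = - slp g x t" unfolding slp_def
    by (smt (verit) minus_diff_eq minus_divide_right)
  have e2: "(- g x - - g y) / (x - y) = - slp g x y" unfolding slp_def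
    by (smt (verit) minus_diff_eq minus_divide_right)
  have e3: "(- g t - - g y) / (t - y) = - slp g t y" unfolding slp_def
    by (smt (verit) minus_diff_eq minus_divide_right)
  show "slp g x y \<le> slp g x t" using l(1) e1 e2 by simp
  show "slp g t y \<le> slp g x y" using l(2) e2 e3 by simp
qed

lemma concave_slope_chain:
  assumes "concave_on {0..1} g" "0 \<le> a" "a < b" "b \<le> c" "c < d" "d \<le> 1"
  shows "slp g c d \<le> slp g a b"
proof (cases "b = c")
  case True
  then show ?thesis using concave_slope3[OF assms(1), of a d b] assms by (simp add: slp_sym)
next
  case False
  then have bc: "b < c" using assms by simp
  have 1: "slp g a c \<le> slp g a b" using concave_slope3(1)[OF assms(1), of a c b] assms bc by simp
  have 2: "slp g b c \<le> slp g a c" using concave_slope3(2)[OF assms(1), of a c b] assms bc by simp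
  have 3: "slp g b d \<le> slp g b c" using concave_slope3(1)[OF assms(1), of b d c] assms bc by simp
  have 4: "slp g c d \<le> slp g b d" using concave_slope3(2)[OF assms(1), of b d c] assms bc by simp
  show ?thesis using 1 2 3 4 by simp
qed

lemma mono_slp_nonneg:
  assumes "mono_on {0..1} g" "0 \<le> a" "a < b" "b \<le> 1"
  shows "0 \<le> slp g a b"
  using assms unfolding slp_def mono_on_def by (auto intro!: divide_nonneg_pos)

lemma left_deriv_eq:
  assumes conc: "concave_on {0..1} g" and mono: "mono_on {0..1} g" and x: "0 < x" "x \<le> 1"
  shows "left_deriv g x = Inf ((\<lambda>t. slp g t x) ` {0<..<x})"
    and "((\<lambda>t. (g x - g t) / (x - t)) \<longlongrightarrow> Inf ((\<lambda>t. slp g t x) ` {0<..<x})) (at_left x)"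
proof -
  let ?S = "(\<lambda>t. slp g t x) ` {0<..<x}"
  let ?L = "Inf ?S"
  have ne: "?S \<noteq> {}" using x by auto
  have bdd: "bdd_below ?S" using mono_slp_nonneg[OF mono] x by (intro bdd_belowI[of _ 0]) auto
  have eq: "(g x - g t) / (x - t) = slp g t x" for t unfolding slp_def by simp
  have lim: "((\<lambda>t. slp g t x) \<longlongrightarrow> ?L) (at_left x)"
  proof (rule order_tendstoI)
    fix a assume "a < ?L"
    have "eventually (\<lambda>t. t \<in> {0<..<x}) (at_left x)"
      using x by (intro eventually_at_leftI[of 0]) auto
    then show "eventually (\<lambda>t. a < slp g t x) (at_left x)"
    proof (rule eventually_mono)
      fix t assume "t \<in> {0<..<x}"
      then have "?L \<le> slp g t x" using bdd by (intro cInf_lower) auto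
      then show "a < slp g t x" using \<open>a < ?L\<close> by simp
    qed
  next
    fix a assume "?L < a"
    then obtain s where s: "s \<in> ?S" "s < a" using cInf_lessD[OF ne] by blast
    then obtain t0 where t0: "t0 \<in> {0<..<x}" "slp g t0 x < a" by auto
    have "eventually (\<lambda>t. t \<in> {t0<..<x}) (at_left x)"
      using t0 by (intro eventually_at_leftI[of t0]) auto
    then show "eventually (\<lambda>t. slp g t x < a) (at_left x)"
    proof (rule eventually_mono)
      fix t assume t: "t \<in> {t0<..<x}"
      have "slp g t x \<le> slp g t0 x"
        using concave_slope3(2)[OF conc, of t0 x t] t t0 x by simp
      then show "slp g t x < a" using t0 by simp
    qed
  qed
  then show "((\<lambda>t. (g x - g t) / (x - t)) \<longlongrightarrow> ?L) (at_left x)" unfolding eq .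
  then show "left_deriv g x = ?L" unfolding left_deriv_def
    by (intro tendsto_Lim) auto
qed

lemma left_deriv_bounds:
  assumes conc: "concave_on {0..1} g" and mono: "mono_on {0..1} g"
    and xy: "0 < x" "x < y" "y \<le> 1"
  shows "left_deriv g y \<le> slp g x y" and "slp g x y \<le> left_deriv g x"
    and "0 \<le> left_deriv g y"
proof -
  have bddy: "bdd_below ((\<lambda>t. slp g t y) ` {0<..<y})"
    using mono_slp_nonneg[OF mono] xy by (intro bdd_belowI[of _ 0]) auto
  show "left_deriv g y \<le> slp g x y" using xy apply (subst left_deriv_eq(1)[OF conc mono, of y])
    apply simp apply simp by (intro cInf_lower bddy) auto
  show "slp g x y \<le> left_deriv g x" using xy apply (subst left_deriv_eq(1)[OF conc mono, of x]) apply simp apply simp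
  proof (intro cInf_greatest)
    fix s assume "s \<in> (\<lambda>t. slp g t x) ` {0<..<x}"
    then obtain t where t: "t \<in> {0<..<x}" "s = slp g t x" by auto
    show "slp g x y \<le> s" using concave_slope_chain[OF conc, of t x x y] t xy by simp
  qed auto
  show "0 \<le> left_deriv g y" using xy apply (subst left_deriv_eq(1)[OF conc mono, of y]) apply simp apply simp
    by (intro cInf_greatest) (auto intro: mono_slp_nonneg[OF mono])
qed

locale cg =
  fixes g :: "real \<Rightarrow> real"
  assumes conc: "concave_on {0..1} g" and mono: "mono_on {0..1} g"
begin

lemma gam_slp:
  assumes "0 < w" "w < v" "v < 1"
  shows "gam g w \<le> slp g (1 - v) (1 - w)" "slp g (1 - v) (1 - w) \<le> gam g v"
  using left_deriv_bounds[OF conc mono, of "1 - v" "1 - w"] assms by (auto simp: gam_def)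

lemma gam_mono: "mono_on {0<..<1} (gam g)"
proof (rule mono_onI)
  fix w v :: real assume "w \<in> {0<..<1}" "v \<in> {0<..<1}" "w \<le> v"
  then show "gam g w \<le> gam g v"
    using gam_slp[of w v] by (cases "w = v") auto
qed

lemma gam_nonneg: "u \<in> {0<..<1} \<Longrightarrow> 0 \<le> gam g u"
  using left_deriv_bounds(3)[OF conc mono, of "(1 - u) / 2" "1 - u"] by (auto simp: gam_def)

lemma gam_bounds:
  assumes "0 < w" "w \<le> v" "v < 1"
  shows "(v - w) * gam g w \<le> g (1 - w) - g (1 - v)" "g (1 - w) - g (1 - v) \<le> (v - w) * gam g v"
proof -
  have "(v - w) * gam g w \<le> g (1 - w) - g (1 - v) \<and> g (1 - w) - g (1 - v) \<le> (v - w) * gam g v"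
  proof (cases "w = v")
    case False
    then have wv: "w < v" using assms by simp
    have e: "slp g (1 - v) (1 - w) = (g (1 - w) - g (1 - v)) / (v - w)" by (simp add: slp_def)
    have p: "v - w > 0" using wv by simp
    show ?thesis using gam_slp[OF assms(1) wv assms(3)] p unfolding e
      by (simp add: field_simps)
  qed simp
  then show "(v - w) * gam g w \<le> g (1 - w) - g (1 - v)" "g (1 - w) - g (1 - v) \<le> (v - w) * gam g v"
    by auto
qed

lemma g_ge_id: "t \<in> {0..1} \<Longrightarrow> g 0 = 0 \<Longrightarrow> g 1 = 1 \<Longrightarrow> t \<le> g t"
  using concave_onD[OF conc, of t 0 1] by simp

end

lemma const_by_bound:
  fixes D L :: "real \<Rightarrow> real"
  assumes ab: "a \<le> b"
    and bnd: "\<And>w v. a \<le> w \<Longrightarrow> w \<le> v \<Longrightarrow> v \<le> b \<Longrightarrow> \<bar>D v - D w\<bar> \<le> (v - w) * (L v - L w)"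
  shows "D b = D a"
proof -
  have step: "\<bar>D (a + real k * ((b - a) / real N)) - D a\<bar> \<le> ((b - a) / real N) * (L (a + real k * ((b - a) / real N)) - L a)"
    if "N > 0" "k \<le> N" for N k
    using that(2)
  proof (induction k)
    case 0 then show ?case by simp
  next
    case (Suc k)
    define h where "h = (b - a) / real N"
    have h0: "0 \<le> h" using ab that by (simp add: h_def)
    have NhE: "real N * h = b - a" using that by (simp add: h_def)
    have kh: "real k * h \<le> b - a" "real (Suc k) * h \<le> b - a"
      using mult_right_mono[of "real k" "real N" h] mult_right_mono[of "real (Suc k)" "real N" h]
        Suc.prems h0 NhE by auto
    have IH: "\<bar>D (a + real k * h) - D a\<bar> \<le> h * (L (a + real k * h) - L a)"
      using Suc by (simp add: h_def)
    have e: "a + real (Suc k) * h = (a + real k * h) + h" by (simp add: algebra_simps)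
    have "\<bar>D (a + real (Suc k) * h) - D (a + real k * h)\<bar> \<le> h * (L (a + real (Suc k) * h) - L (a + real k * h))"
      using bnd[of "a + real k * h" "a + real (Suc k) * h"] kh h0 e by (auto simp: mult_nonneg_nonneg)
    with IH have "\<bar>D (a + real (Suc k) * h) - D a\<bar> \<le> h * (L (a + real (Suc k) * h) - L a)"
      by (simp add: algebra_simps)
    then show ?case by (simp add: h_def)
  qed
  have key: "\<bar>D b - D a\<bar> \<le> ((b - a) / real N) * (L b - L a)" if "N > 0" for N
    using step[OF that order.refl] that by simp
  show ?thesis
  proof (rule ccontr)
    assume "D b \<noteq> D a"
    then have dp: "\<bar>D b - D a\<bar> > 0" by simp
    obtain N :: nat where N: "real N > (b - a) * \<bar>L b - L a\<bar> / \<bar>D b - D a\<bar>"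
      using reals_Archimedean2 by blast
    have nn: "0 \<le> (b - a) * \<bar>L b - L a\<bar> / \<bar>D b - D a\<bar>" using ab by simp
    have Np: "N > 0" using N nn by (cases N) auto
    have "\<bar>D b - D a\<bar> \<le> ((b - a) / real N) * \<bar>L b - L a\<bar>"
      using key[OF Np] ab by (smt (verit) abs_ge_self divide_nonneg_nonneg mult_left_mono of_nat_0_le_iff)
    also have "\<dots> < \<bar>D b - D a\<bar>"
      using N Np dp ab by (simp add: field_simps)
    finally show False by simp
  qed
qed

definition PhiG :: "(real \<Rightarrow> real) \<Rightarrow> real \<Rightarrow> real" where
  "PhiG g v = integral\<^sup>L M01 (\<lambda>u. indicator {..v} u * gam g u)"

context cg
begin

lemma gam_meas: "gam g \<in> borel_measurable M01"
  by (rule measurable_M01_mono[OF gam_mono])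

lemma sets_M01_Ioc: "0 \<le> w \<Longrightarrow> v < 1 \<Longrightarrow> {w<..v} \<in> sets M01"
  by (auto simp: M01_def sets_restrict_space_iff)

lemma sets_M01_atMost: "{..v} \<inter> {0<..<1} \<in> sets M01"
  by (auto simp: M01_def sets_restrict_space_iff)

context
  assumes gint: "integrable M01 (gam g)"
begin

lemma int_ind: "integrable M01 (\<lambda>u. indicator A u * gam g u)" if "A \<inter> {0<..<1} \<in> sets M01"
proof -
  have "integrable M01 (\<lambda>u. indicator (A \<inter> {0<..<1}) u *\<^sub>R gam g u)"
    by (rule integrable_mult_indicator[OF that gint])
  then show ?thesis
    by (rule Bochner_Integration.integrable_cong[THEN iffD1, rotated -1]) (auto split: split_indicator)
qed

lemma Phi_diff:
  assumes "w \<le> v"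
  shows "PhiG g v - PhiG g w = integral\<^sup>L M01 (\<lambda>u. indicator {w<..v} u * gam g u)"
proof -
  have "PhiG g v - PhiG g w = integral\<^sup>L M01 (\<lambda>u. indicator {..v} u * gam g u - indicator {..w} u * gam g u)"
    unfolding PhiG_def
    by (rule Bochner_Integration.integral_diff[symmetric]; rule int_ind; rule sets_M01_atMost)
  also have "\<dots> = integral\<^sup>L M01 (\<lambda>u. indicator {w<..v} u * gam g u)"
    using assms by (intro Bochner_Integration.integral_cong) (auto split: split_indicator)
  finally show ?thesis .
qed

lemma int_ind_const:
  assumes "0 \<le> w" "w \<le> v" "v < 1"
  shows "integral\<^sup>L M01 (\<lambda>u. indicator {w<..v} u * c) = (v - w) * c"
proof -
  have "integral\<^sup>L M01 (\<lambda>u. indicator {w<..v} u * c) = measure M01 ({w<..v} \<inter> {0<..<1}) * c"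
    by simp
  also have "{w<..v} \<inter> {0<..<1} = {w<..v}" using assms by auto
  also have "measure M01 {w<..v} = v - w" using assms by (subst measure_M01) auto
  finally show ?thesis .
qed

lemma Phi_bounds:
  assumes "0 < w" "w \<le> v" "v < 1"
  shows "(v - w) * gam g w \<le> PhiG g v - PhiG g w" "PhiG g v - PhiG g w \<le> (v - w) * gam g v"
proof -
  interpret P: prob_space M01 by (rule prob_M01)
  have s: "{w<..v} \<in> sets M01" using assms by (intro sets_M01_Ioc) auto
  have s': "{w<..v} \<inter> {0<..<1} \<in> sets M01" using assms s by (simp add: Int_absorb2 subset_iff)
  have ic: "integrable M01 (\<lambda>u. indicator {w<..v} u * c)" for c :: real
    using integrable_real_mult_indicator[OF s P.integrable_const[of c]] by (simp add: mult.commute)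
  have ig: "integrable M01 (\<lambda>u. indicator {w<..v} u * gam g u)" by (rule int_ind[OF s'])
  have p1: "indicator {w<..v} u * gam g w \<le> indicator {w<..v} u * gam g u" if "u \<in> space M01" for u
  proof (cases "u \<in> {w<..v}")
    case True
    then have "gam g w \<le> gam g u" using gam_mono assms that by (intro mono_onD[OF gam_mono]) auto
    then show ?thesis using True by simp
  qed simp
  have p2: "indicator {w<..v} u * gam g u \<le> indicator {w<..v} u * gam g v" if "u \<in> space M01" for u
  proof (cases "u \<in> {w<..v}")
    case True
    then have "gam g u \<le> gam g v" using gam_mono assms that by (intro mono_onD[OF gam_mono]) auto
    then show ?thesis using True by simp
  qed simp
  have "integral\<^sup>L M01 (\<lambda>u. indicator {w<..v} u * gam g w) \<le> integral\<^sup>L M01 (\<lambda>u. indicator {w<..v} u * gam g u)"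
    by (rule integral_mono[OF ic ig p1])
  then show "(v - w) * gam g w \<le> PhiG g v - PhiG g w"
    using assms Phi_diff[OF assms(2)] int_ind_const[of w v "gam g w"] by linarith
  have "integral\<^sup>L M01 (\<lambda>u. indicator {w<..v} u * gam g u) \<le> integral\<^sup>L M01 (\<lambda>u. indicator {w<..v} u * gam g v)"
    by (rule integral_mono[OF ig ic p2])
  then show "PhiG g v - PhiG g w \<le> (v - w) * gam g v"
    using assms Phi_diff[OF assms(2)] int_ind_const[of w v "gam g v"] by linarith
qed

lemma Phi_ftc:
  assumes "0 < a" "a \<le> b" "b < 1"
  shows "PhiG g b - PhiG g a = g (1 - a) - g (1 - b)"
proof -
  define D where "D v = PhiG g v + g (1 - v)" for v
  have "D b = D a"
  proof (rule const_by_bound[where L="gam g" and D=D])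
    show "a \<le> b" by fact
    fix w v assume wv: "a \<le> w" "w \<le> v" "v \<le> b"
    have w0: "0 < w" "v < 1" using wv assms by auto
    note pb = Phi_bounds[OF w0(1) wv(2) w0(2)]
    note gb = gam_bounds[OF w0(1) wv(2) w0(2)]
    have "D v - D w = (PhiG g v - PhiG g w) - (g (1 - w) - g (1 - v))" by (simp add: D_def)
    then show "\<bar>D v - D w\<bar> \<le> (v - w) * (gam g v - gam g w)"
      using pb gb by (simp add: algebra_simps abs_le_iff)
  qed
  then show ?thesis by (simp add: D_def)
qed

end
end

lemma an_lim: "(\<lambda>n. 1 / (real n + 2)) \<longlonglongrightarrow> 0"
proof -
  have "(\<lambda>n. 1 / (real (n + 2))) \<longlonglongrightarrow> 0"
    using LIMSEQ_ignore_initial_segment[OF lim_const_over_n[of 1], of 2] by simp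
  then show ?thesis by (simp add: add.commute)
qed

lemma an_event: "u > 0 \<Longrightarrow> eventually (\<lambda>n. 1 / (real n + 2) < u) sequentially"
  using an_lim by (rule order_tendstoD) 

context cg
begin

context
  assumes gint: "integrable M01 (gam g)" and g0: "g 0 = 0" and g1: "g 1 = 1"
    and ac: "abs_cont_01 g"
begin

lemma g_lim0: "(\<lambda>n. g (1 / (real n + 2))) \<longlonglongrightarrow> 0"
proof (rule LIMSEQ_I)
  fix e :: real assume e: "0 < e"
  obtain d where d: "d > 0" and H: "\<And>(n::nat) (a::nat \<Rightarrow> real) b.
      (\<forall>k<n. 0 \<le> a k \<and> a k \<le> b k \<and> b k \<le> 1) \<and>
      (\<forall>k<n. \<forall>l<n. k \<noteq> l \<longrightarrow> b k \<le> a l \<or> b l \<le> a k) \<and>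
      (\<Sum>k<n. b k - a k) < d \<longrightarrow> (\<Sum>k<n. \<bar>g (b k) - g (a k)\<bar>) < e"
    using ac e unfolding abs_cont_01_def by blast
  obtain N where N: "\<forall>n\<ge>N. 1 / (real n + 2) < d"
    using an_event[OF d] by (auto simp: eventually_sequentially)
  show "\<exists>N. \<forall>n\<ge>N. norm (g (1 / (real n + 2)) - 0) < e"
  proof (intro exI allI impI)
    fix n assume "N \<le> n"
    then have nd: "1 / (real n + 2) < d" using N by simp
    have "(\<Sum>k<Suc 0. \<bar>g ((\<lambda>_. 1 / (real n + 2)) k) - g ((\<lambda>_. 0) k)\<bar>) < e"
      using H[of "Suc 0" "\<lambda>_. 0" "\<lambda>_. 1 / (real n + 2)"] nd by simp
    then show "norm (g (1 / (real n + 2)) - 0) < e" using g0 by (simp add: lessThan_Suc)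
  qed
qed

lemma g_lim1: "(\<lambda>n. g (1 - 1 / (real n + 2))) \<longlonglongrightarrow> 1"
proof (rule tendsto_sandwich[where f="\<lambda>n. 1 - 1 / (real n + 2)" and h="\<lambda>n. 1"])
  have le: "1 / (real n + 2) \<le> 1" for n :: nat by simp
  show "eventually (\<lambda>n. 1 - 1 / (real n + 2) \<le> g (1 - 1 / (real n + 2))) sequentially"
    using le g0 g1 by (intro always_eventually allI g_ge_id) auto
  show "eventually (\<lambda>n. g (1 - 1 / (real n + 2)) \<le> 1) sequentially"
  proof (intro always_eventually allI)
    fix n :: nat
    have "g (1 - 1 / (real n + 2)) \<le> g 1" using le[of n] by (intro mono_onD[OF mono]) auto
    then show "g (1 - 1 / (real n + 2)) \<le> 1" using g1 by simp
  qed
  show "(\<lambda>n. 1 - 1 / (real n + 2)) \<longlonglongrightarrow> 1"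
    using tendsto_diff[OF tendsto_const[of 1] an_lim] by simp
qed simp

lemma gam_integral: "integral\<^sup>L M01 (gam g) = 1"
proof -
  define a where "a n = 1 / (real n + 2)" for n :: nat
  have a: "0 < a n" "a n \<le> 1 - a n" "1 - a n < 1" for n
    by (auto simp: a_def field_simps)
  have eq: "PhiG g (1 - a n) - PhiG g (a n) = g (1 - a n) - g (a n)" for n
    using Phi_ftc[OF gint a(1) a(2) a(3)] by simp
  have meas_s: "(\<lambda>u. indicator {..c} u * gam g u) \<in> borel_measurable M01" for c
    by (rule borel_measurable_integrable, rule int_ind[OF gint sets_M01_atMost])
  have L1: "(\<lambda>n. PhiG g (1 - a n)) \<longlonglongrightarrow> integral\<^sup>L M01 (gam g)"
    unfolding PhiG_def
  proof (rule integral_dominated_convergence[where w="\<lambda>u. \<bar>gam g u\<bar>"])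
    show "gam g \<in> borel_measurable M01" by (rule gam_meas)
    show "(\<lambda>u. indicator {..1 - a n} u * gam g u) \<in> borel_measurable M01" for n by (rule meas_s)
    show "integrable M01 (\<lambda>u. \<bar>gam g u\<bar>)" using gint by simp
    show "AE u in M01. norm (indicator {..1 - a n} u * gam g u) \<le> \<bar>gam g u\<bar>" for n
      by (intro AE_I2) (auto split: split_indicator)
    show "AE u in M01. (\<lambda>n. indicator {..1 - a n} u * gam g u) \<longlonglongrightarrow> gam g u"
    proof (intro AE_I2)
      fix u assume "u \<in> space M01"
      then have "1 - u > 0" by simp
      then have "eventually (\<lambda>n. a n < 1 - u) sequentially" unfolding a_def by (rule an_event)
      then have "eventually (\<lambda>n. indicator {..1 - a n} u * gam g u = gam g u) sequentially"
        by (rule eventually_mono) (auto split: split_indicator)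
      then show "(\<lambda>n. indicator {..1 - a n} u * gam g u) \<longlonglongrightarrow> gam g u"
        by (rule tendsto_eventually)
    qed
  qed
  have L0: "(\<lambda>n. PhiG g (a n)) \<longlonglongrightarrow> integral\<^sup>L M01 (\<lambda>u. 0)"
    unfolding PhiG_def
  proof (rule integral_dominated_convergence[where w="\<lambda>u. \<bar>gam g u\<bar>"])
    show "(\<lambda>u. indicator {..a n} u * gam g u) \<in> borel_measurable M01" for n by (rule meas_s)
    show "integrable M01 (\<lambda>u. \<bar>gam g u\<bar>)" using gint by simp
    show "AE u in M01. norm (indicator {..a n} u * gam g u) \<le> \<bar>gam g u\<bar>" for n
      by (intro AE_I2) (auto split: split_indicator)
    show "AE u in M01. (\<lambda>n. indicator {..a n} u * gam g u) \<longlonglongrightarrow> 0"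
    proof (intro AE_I2)
      fix u assume "u \<in> space M01"
      then have "u > 0" by simp
      then have "eventually (\<lambda>n. a n < u) sequentially" unfolding a_def by (rule an_event)
      then have "eventually (\<lambda>n. indicator {..a n} u * gam g u = 0) sequentially"
        by (rule eventually_mono) (auto split: split_indicator)
      then show "(\<lambda>n. indicator {..a n} u * gam g u) \<longlonglongrightarrow> 0"
        by (rule tendsto_eventually)
    qed
  qed simp
  have "(\<lambda>n. PhiG g (1 - a n) - PhiG g (a n)) \<longlonglongrightarrow> integral\<^sup>L M01 (gam g) - 0"
    using tendsto_diff[OF L1 L0] by simp
  moreover have "(\<lambda>n. PhiG g (1 - a n) - PhiG g (a n)) \<longlonglongrightarrow> 1 - 0"
  proof -
    have "(\<lambda>n. PhiG g (1 - a n) - PhiG g (a n)) = (\<lambda>n. g (1 - a n) - g (a n))" using eq by simp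
    then show ?thesis unfolding a_def using tendsto_diff[OF g_lim1 g_lim0] by simp
  qed
  ultimately show ?thesis using LIMSEQ_unique by fastforce
qed

end
end

lemma t1_eq:
  fixes \<sigma> el :: real assumes "\<sigma> > 0"
  shows "el - el\<^sup>2 / (4 * \<sigma>\<^sup>2) = \<sigma>\<^sup>2 - (\<sigma> - el / (2 * \<sigma>))\<^sup>2"
  using assms by (simp add: field_simps power2_eq_square)

lemma ct_le_ks:
  fixes \<sigma> c s t k :: real
  assumes "0 \<le> c" "c \<le> 1" "\<sigma> * c \<le> s" "0 \<le> \<sigma>" "t = sqrt (\<sigma>\<^sup>2 - s\<^sup>2)" "s\<^sup>2 \<le> \<sigma>\<^sup>2" "k = sqrt (1 - c\<^sup>2)"
  shows "c * t \<le> k * s"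
proof -
  have sc0: "0 \<le> \<sigma> * c" by (rule mult_nonneg_nonneg[OF assms(4) assms(1)])
  have s0: "0 \<le> s" using sc0 assms(3) by linarith
  have c2: "c\<^sup>2 \<le> 1" using power_le_one[OF assms(1) assms(2), of 2] .
  have k0: "0 \<le> k" "k\<^sup>2 = 1 - c\<^sup>2" unfolding assms(7) using c2 by simp_all
  have t0: "0 \<le> t" "t\<^sup>2 = \<sigma>\<^sup>2 - s\<^sup>2" unfolding assms(5) using assms(6) by simp_all
  have "(\<sigma> * c)\<^sup>2 \<le> s\<^sup>2" using power_mono[OF assms(3) sc0, of 2] .
  moreover have "(c * t)\<^sup>2 = c\<^sup>2 * \<sigma>\<^sup>2 - c\<^sup>2 * s\<^sup>2"
    by (subst power_mult_distrib, subst t0(2), simp add: right_diff_distrib)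
  moreover have "(k * s)\<^sup>2 = s\<^sup>2 - c\<^sup>2 * s\<^sup>2"
    by (subst power_mult_distrib, subst k0(2), simp add: left_diff_distrib)
  moreover have "(\<sigma> * c)\<^sup>2 = c\<^sup>2 * \<sigma>\<^sup>2" unfolding power_mult_distrib by simp
  ultimately have "(c * t)\<^sup>2 \<le> (k * s)\<^sup>2" by linarith
  then show ?thesis by (rule power2_le_imp_le[OF _ mult_nonneg_nonneg[OF k0(1) s0]])
qed

lemma R1:
  fixes \<sigma> c s eps :: real
  assumes sp: "\<sigma> > 0" and c0: "0 \<le> c" and c1: "c \<le> 1" and ss: "s\<^sup>2 \<le> \<sigma>\<^sup>2"
    and slo: "\<sigma> - eps / (2 * \<sigma>) \<le> s" and ep: "eps > 0"
  defines "el \<equiv> min eps (2 * \<sigma>\<^sup>2 * (1 - c))"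
  defines "s1 \<equiv> \<sigma> - el / (2 * \<sigma>)"
  defines "t1 \<equiv> sqrt (el - el\<^sup>2 / (4 * \<sigma>\<^sup>2))"
  shows "c * s + sqrt (1 - c\<^sup>2) * sqrt (\<sigma>\<^sup>2 - s\<^sup>2) \<le> c * s1 + sqrt (1 - c\<^sup>2) * t1"
proof -
  define k where "k = sqrt (1 - c\<^sup>2)"
  define t where "t = sqrt (\<sigma>\<^sup>2 - s\<^sup>2)"
  have c2: "c\<^sup>2 \<le> 1" using power_le_one[OF c0 c1, of 2] .
  have k0: "0 \<le> k" "k\<^sup>2 = 1 - c\<^sup>2" unfolding k_def using c2 by simp_all
  have t0: "0 \<le> t" "t\<^sup>2 = \<sigma>\<^sup>2 - s\<^sup>2" unfolding t_def using ss by simp_all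
  have t1d: "t1 = sqrt (\<sigma>\<^sup>2 - s1\<^sup>2)" unfolding t1_def s1_def using t1_eq[OF sp] by simp
  have s1le: "\<sigma> * c \<le> s1"
  proof -
    have "el \<le> 2 * \<sigma>\<^sup>2 * (1 - c)" unfolding el_def by simp
    then have "el / (2 * \<sigma>) \<le> 2 * \<sigma>\<^sup>2 * (1 - c) / (2 * \<sigma>)" using sp by (intro divide_right_mono) simp_all
    also have "\<dots> = \<sigma> * (1 - c)" using sp by (simp add: power2_eq_square field_simps)
    finally show ?thesis unfolding s1_def by (simp add: algebra_simps)
  qed
  have s1s: "s1 \<le> \<sigma>"
  proof -
    have "0 \<le> el" unfolding el_def using sp c1 ep by simp
    then show ?thesis unfolding s1_def using sp by (simp add: divide_nonneg_pos)
  qed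
  have s1sq: "s1\<^sup>2 \<le> \<sigma>\<^sup>2"
  proof -
    have "0 \<le> \<sigma> * c" using sp c0 by simp
    then have "0 \<le> s1" using s1le by linarith
    then show ?thesis using power_mono[OF s1s, of 2] by simp
  qed
  show ?thesis
  proof (cases "eps \<le> 2 * \<sigma>\<^sup>2 * (1 - c)")
    case True
    then have el: "el = eps" unfolding el_def by simp
    have ss1: "s1 \<le> s" using slo unfolding s1_def el .
    have sge: "\<sigma> * c \<le> s" using s1le ss1 by simp
    have "0 \<le> \<sigma> * c" using sp c0 by simp
    then have s1ge0: "0 \<le> s1" using s1le by linarith
    have A: "c * t \<le> k * s" by (rule ct_le_ks[OF c0 c1 sge _ t_def ss k_def]) (use sp in auto)
    have B: "c * t1 \<le> k * s1" by (rule ct_le_ks[OF c0 c1 s1le _ t1d s1sq k_def]) (use sp in auto)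
    have "s1\<^sup>2 \<le> s\<^sup>2" using power_mono[OF ss1 s1ge0, of 2] .
    then have t1t: "t \<le> t1" unfolding t_def t1d by (intro real_sqrt_le_mono) linarith
    have t1ge: "0 \<le> t1" unfolding t1d using s1sq by simp
    have sq: "(s - s1) * (s + s1) = (t1 - t) * (t1 + t)"
      using t0 t1d s1sq by (simp add: algebra_simps power2_eq_square)
    have "c * (s - s1) \<le> k * (t1 - t)"
    proof (cases "s + s1 = 0")
      case True
      then have "s = 0" "s1 = 0" using ss1 s1ge0 by auto
      then show ?thesis using t1d t_def by simp
    next
      case False
      then have sp2: "s + s1 > 0" using ss1 s1ge0 by simp
      have "c * (s - s1) * (s + s1) = c * ((s - s1) * (s + s1))" by (simp add: ac_simps)
      also have "\<dots> = c * ((t1 - t) * (t1 + t))" using sq by simp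
      also have "\<dots> = c * (t1 + t) * (t1 - t)" by (simp add: ac_simps)
      also have "\<dots> \<le> k * (s + s1) * (t1 - t)"
        using A B t1t by (intro mult_right_mono) (auto simp: algebra_simps)
      finally have "c * (s - s1) * (s + s1) \<le> k * (t1 - t) * (s + s1)" by (simp add: algebra_simps)
      then show ?thesis using sp2 by simp
    qed
    then show ?thesis unfolding k_def[symmetric] t_def[symmetric] by (simp add: algebra_simps)
  next
    case False
    then have el: "el = 2 * \<sigma>\<^sup>2 * (1 - c)" unfolding el_def by simp
    have s1e: "s1 = \<sigma> * c" unfolding s1_def el using sp by (simp add: power2_eq_square field_simps)
    have t1e: "t1 = \<sigma> * k"
    proof -
      have "\<sigma>\<^sup>2 - s1\<^sup>2 = \<sigma>\<^sup>2 * (1 - c\<^sup>2)" using s1e by (simp add: power_mult_distrib right_diff_distrib)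
      also have "\<dots> = (\<sigma> * k)\<^sup>2" using k0(2) by (simp add: power_mult_distrib)
      finally have "\<sigma>\<^sup>2 - s1\<^sup>2 = (\<sigma> * k)\<^sup>2" .
      then show ?thesis using t1d sp k0 by simp
    qed
    have "c * s1 + k * t1 = \<sigma> * (c\<^sup>2 + k\<^sup>2)" unfolding s1e t1e by (simp add: power2_eq_square distrib_left ac_simps)
    then have rhs: "c * s1 + k * t1 = \<sigma>" using k0(2) by simp
    have "(c * s + k * t)\<^sup>2 \<le> (c\<^sup>2 + k\<^sup>2) * (s\<^sup>2 + t\<^sup>2)"
    proof -
      have "(c\<^sup>2 + k\<^sup>2) * (s\<^sup>2 + t\<^sup>2) - (c * s + k * t)\<^sup>2 = (c * t - k * s)\<^sup>2"
        by (simp add: power2_eq_square algebra_simps)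
      moreover have "0 \<le> (c * t - k * s)\<^sup>2" by simp
      ultimately show ?thesis by linarith
    qed
    also have "\<dots> = \<sigma>\<^sup>2" using k0 t0 by simp
    finally have "\<bar>c * s + k * t\<bar> \<le> \<bar>\<sigma>\<bar>" by (simp only: abs_le_square_iff)
    then have "c * s + k * t \<le> \<sigma>" using sp by simp
    then show ?thesis using rhs unfolding k_def[symmetric] t_def[symmetric] by simp
  qed
qed

lemma s1_facts:
  fixes \<sigma> c eps :: real
  assumes sp: "\<sigma> > 0" and c0: "0 \<le> c" and c1: "c \<le> 1" and ep: "eps > 0"
  defines "el \<equiv> min eps (2 * \<sigma>\<^sup>2 * (1 - c))"
  defines "s1 \<equiv> \<sigma> - el / (2 * \<sigma>)"
  defines "t1 \<equiv> sqrt (el - el\<^sup>2 / (4 * \<sigma>\<^sup>2))"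
  shows "\<sigma> * c \<le> s1" "s1 \<le> \<sigma>" "s1\<^sup>2 \<le> \<sigma>\<^sup>2" "t1 = sqrt (\<sigma>\<^sup>2 - s1\<^sup>2)" "0 \<le> t1"
    "c * t1 \<le> sqrt (1 - c\<^sup>2) * s1" "0 \<le> el" "el \<le> eps" "2 * \<sigma> * (\<sigma> - s1) = el"
    "t1\<^sup>2 = \<sigma>\<^sup>2 - s1\<^sup>2"
proof -
  show t1d: "t1 = sqrt (\<sigma>\<^sup>2 - s1\<^sup>2)" unfolding t1_def s1_def using t1_eq[OF sp] by simp
  show s1le: "\<sigma> * c \<le> s1"
  proof -
    have "el \<le> 2 * \<sigma>\<^sup>2 * (1 - c)" unfolding el_def by simp
    then have "el / (2 * \<sigma>) \<le> 2 * \<sigma>\<^sup>2 * (1 - c) / (2 * \<sigma>)" using sp by (intro divide_right_mono) simp_all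
    also have "\<dots> = \<sigma> * (1 - c)" using sp by (simp add: power2_eq_square field_simps)
    finally show ?thesis unfolding s1_def by (simp add: algebra_simps)
  qed
  show el0: "0 \<le> el" unfolding el_def using sp c1 ep by simp
  then show s1s: "s1 \<le> \<sigma>" unfolding s1_def using sp by (simp add: divide_nonneg_pos)
  have "0 \<le> \<sigma> * c" using sp c0 by simp
  then have s10: "0 \<le> s1" using s1le by linarith
  then show s1sq: "s1\<^sup>2 \<le> \<sigma>\<^sup>2" using power_mono[OF s1s, of 2] by simp
  show "0 \<le> t1" unfolding t1d using s1sq by simp
  show "t1\<^sup>2 = \<sigma>\<^sup>2 - s1\<^sup>2" unfolding t1d using s1sq by simp
  show "c * t1 \<le> sqrt (1 - c\<^sup>2) * s1"
    by (rule ct_le_ks[OF c0 c1 s1le _ t1d s1sq refl]) (use sp in simp)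
  show "el \<le> eps" unfolding el_def by simp
  show "2 * \<sigma> * (\<sigma> - s1) = el" unfolding s1_def using sp by simp
qed

lemma lin2:
  fixes a b c :: "'a \<Rightarrow> real"
  assumes m: "a \<in> borel_measurable M" "b \<in> borel_measurable M" "c \<in> borel_measurable M"
    and i: "integrable M (\<lambda>x. (a x)\<^sup>2)" "integrable M (\<lambda>x. (b x)\<^sup>2)" "integrable M (\<lambda>x. (c x)\<^sup>2)"
  shows "(\<integral>x. (\<alpha> * a x + \<beta> * b x) * c x \<partial>M) = \<alpha> * (\<integral>x. a x * c x \<partial>M) + \<beta> * (\<integral>x. b x * c x \<partial>M)"
proof -
  have ac: "integrable M (\<lambda>x. a x * c x)" by (rule sq_integrable_prod[OF m(1,3) i(1,3)])
  have bc: "integrable M (\<lambda>x. b x * c x)" by (rule sq_integrable_prod[OF m(2,3) i(2,3)])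
  have "(\<integral>x. (\<alpha> * a x + \<beta> * b x) * c x \<partial>M) = (\<integral>x. \<alpha> * (a x * c x) + \<beta> * (b x * c x) \<partial>M)"
    by (simp add: algebra_simps)
  also have "\<dots> = \<alpha> * (\<integral>x. a x * c x \<partial>M) + \<beta> * (\<integral>x. b x * c x \<partial>M)"
    using ac bc by simp
  finally show ?thesis .
qed

lemma sq2:
  fixes a b :: "'a \<Rightarrow> real"
  assumes m: "a \<in> borel_measurable M" "b \<in> borel_measurable M"
    and i: "integrable M (\<lambda>x. (a x)\<^sup>2)" "integrable M (\<lambda>x. (b x)\<^sup>2)"
  shows "(\<integral>x. (\<alpha> * a x + \<beta> * b x)\<^sup>2 \<partial>M) = \<alpha>\<^sup>2 * (\<integral>x. (a x)\<^sup>2 \<partial>M) + 2 * \<alpha> * \<beta> * (\<integral>x. a x * b x \<partial>M) + \<beta>\<^sup>2 * (\<integral>x. (b x)\<^sup>2 \<partial>M)"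
    and "integrable M (\<lambda>x. (\<alpha> * a x + \<beta> * b x)\<^sup>2)"
    and "(\<lambda>x. \<alpha> * a x + \<beta> * b x) \<in> borel_measurable M"
proof -
  have ab: "integrable M (\<lambda>x. a x * b x)" by (rule sq_integrable_prod[OF m i])
  have e: "(\<lambda>x. (\<alpha> * a x + \<beta> * b x)\<^sup>2) = (\<lambda>x. \<alpha>\<^sup>2 * (a x)\<^sup>2 + 2 * \<alpha> * \<beta> * (a x * b x) + \<beta>\<^sup>2 * (b x)\<^sup>2)"
    by (simp add: power2_eq_square algebra_simps)
  show "(\<integral>x. (\<alpha> * a x + \<beta> * b x)\<^sup>2 \<partial>M) = \<alpha>\<^sup>2 * (\<integral>x. (a x)\<^sup>2 \<partial>M) + 2 * \<alpha> * \<beta> * (\<integral>x. a x * b x \<partial>M) + \<beta>\<^sup>2 * (\<integral>x. (b x)\<^sup>2 \<partial>M)"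
    unfolding e using ab i by simp
  show "integrable M (\<lambda>x. (\<alpha> * a x + \<beta> * b x)\<^sup>2)"
    unfolding e using ab i by simp
  show "(\<lambda>x. \<alpha> * a x + \<beta> * b x) \<in> borel_measurable M" using m by simp
qed

lemma bil:
  fixes a b c d :: "'a \<Rightarrow> real"
  assumes m: "a \<in> borel_measurable M" "b \<in> borel_measurable M" "c \<in> borel_measurable M" "d \<in> borel_measurable M"
    and i: "integrable M (\<lambda>x. (a x)\<^sup>2)" "integrable M (\<lambda>x. (b x)\<^sup>2)" "integrable M (\<lambda>x. (c x)\<^sup>2)" "integrable M (\<lambda>x. (d x)\<^sup>2)"
  shows "(\<integral>x. (\<alpha> * a x + \<beta> * b x) * (\<gamma> * c x + \<delta> * d x) \<partial>M) =
    \<alpha> * \<gamma> * (\<integral>x. a x * c x \<partial>M) + \<alpha> * \<delta> * (\<integral>x. a x * d x \<partial>M)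
    + \<beta> * \<gamma> * (\<integral>x. b x * c x \<partial>M) + \<beta> * \<delta> * (\<integral>x. b x * d x \<partial>M)"
proof -
  have ac: "integrable M (\<lambda>x. a x * c x)" by (rule sq_integrable_prod[OF m(1,3) i(1,3)])
  have ad: "integrable M (\<lambda>x. a x * d x)" by (rule sq_integrable_prod[OF m(1,4) i(1,4)])
  have bc: "integrable M (\<lambda>x. b x * c x)" by (rule sq_integrable_prod[OF m(2,3) i(2,3)])
  have bd: "integrable M (\<lambda>x. b x * d x)" by (rule sq_integrable_prod[OF m(2,4) i(2,4)])
  have "(\<integral>x. (\<alpha> * a x + \<beta> * b x) * (\<gamma> * c x + \<delta> * d x) \<partial>M) =
     (\<integral>x. \<alpha> * \<gamma> * (a x * c x) + \<alpha> * \<delta> * (a x * d x) + \<beta> * \<gamma> * (b x * c x) + \<beta> * \<delta> * (b x * d x) \<partial>M)"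
    by (rule Bochner_Integration.integral_cong) (simp_all add: algebra_simps)
  also have "\<dots> = \<alpha> * \<gamma> * (\<integral>x. a x * c x \<partial>M) + \<alpha> * \<delta> * (\<integral>x. a x * d x \<partial>M)
    + \<beta> * \<gamma> * (\<integral>x. b x * c x \<partial>M) + \<beta> * \<delta> * (\<integral>x. b x * d x \<partial>M)"
    using ac ad bc bd by simp
  finally show ?thesis .
qed

lemma int_comm: "(\<integral>x. a x * b x \<partial>M) = (\<integral>x. b x * a x \<partial>M)" for a b :: "'a \<Rightarrow> real"
  by (simp add: mult.commute)

lemma upper_core:
  fixes f gt q :: "'a \<Rightarrow> real"
  assumes m: "f \<in> borel_measurable M" "gt \<in> borel_measurable M" "q \<in> borel_measurable M"
    and i: "integrable M (\<lambda>x. (f x)\<^sup>2)" "integrable M (\<lambda>x. (gt x)\<^sup>2)" "integrable M (\<lambda>x. (q x)\<^sup>2)"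
    and f2: "(\<integral>x. (f x)\<^sup>2 \<partial>M) = 1" and gt2: "(\<integral>x. (gt x)\<^sup>2 \<partial>M) = V"
    and fg: "(\<integral>x. f x * gt x \<partial>M) = c * sqrt V" and c0: "0 \<le> c" and c1: "c \<le> 1"
    and q2: "(\<integral>x. (q x)\<^sup>2 \<partial>M) = \<sigma>\<^sup>2" and sp: "\<sigma> > 0" and ep: "eps > 0"
    and dist: "(\<integral>x. (q x - \<sigma> * f x)\<^sup>2 \<partial>M) \<le> eps"
  defines "el \<equiv> min eps (2 * \<sigma>\<^sup>2 * (1 - c))"
  shows "(\<integral>x. gt x * q x \<partial>M) \<le> (\<sigma> - el / (2 * \<sigma>)) * sqrt V * c + sqrt (el - el\<^sup>2 / (4 * \<sigma>\<^sup>2)) * sqrt (V * (1 - c\<^sup>2))"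
proof -
  have V0: "0 \<le> V" using gt2[symmetric] by simp
  define a where "a = sqrt V"
  have a0: "0 \<le> a" "a\<^sup>2 = V" using V0 by (auto simp: a_def)
  define s where "s = (\<integral>x. q x * f x \<partial>M)"
  have qf: "(\<integral>x. f x * q x \<partial>M) = s" unfolding s_def by (rule int_comm)
  have gf: "(\<integral>x. gt x * f x \<partial>M) = c * a" using fg int_comm[where a=f and b=gt] by (simp add: a_def)
  have "(\<integral>x. (q x - \<sigma> * f x)\<^sup>2 \<partial>M) = (\<integral>x. (1 * q x + (- \<sigma>) * f x)\<^sup>2 \<partial>M)" by simp
  also have "\<dots> = \<sigma>\<^sup>2 - 2 * \<sigma> * s + \<sigma>\<^sup>2"
    using sq2(1)[OF m(3,1) i(3,1), of 1 "- \<sigma>"] q2 f2 by (simp add: s_def)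
  finally have "\<sigma>\<^sup>2 - 2 * \<sigma> * s + \<sigma>\<^sup>2 \<le> eps" using dist by simp
  then have "(\<sigma> - s) * (2 * \<sigma>) \<le> eps" by (simp add: power2_eq_square algebra_simps)
  then have "\<sigma> - s \<le> eps / (2 * \<sigma>)" using sp by (simp add: pos_le_divide_eq)
  then have slo: "\<sigma> - eps / (2 * \<sigma>) \<le> s" by linarith
  have ss: "s\<^sup>2 \<le> \<sigma>\<^sup>2" using cauchy_schwarz_int[OF m(3,1) i(3,1)] q2 f2 by (simp add: s_def)
  define X where "X = (\<integral>x. (1 * gt x + (- (c * a)) * f x) * (1 * q x + (- s) * f x) \<partial>M)"
  have X: "X = (\<integral>x. gt x * q x \<partial>M) - c * a * s"
  proof -
    have "X = (\<integral>x. gt x * q x \<partial>M) - s * (c * a) - c * a * s + c * a * s"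
      unfolding X_def bil[OF m(2,1,3,1) i(2,1,3,1)] gf qf f2[unfolded power2_eq_square]
      by (simp add: power2_eq_square)
    then show ?thesis by simp
  qed
  have r2: "(\<integral>x. (1 * gt x + (- (c * a)) * f x)\<^sup>2 \<partial>M) = V * (1 - c\<^sup>2)"
  proof -
    have "(\<integral>x. (1 * gt x + (- (c * a)) * f x)\<^sup>2 \<partial>M) = 1\<^sup>2 * V + 2 * 1 * (- (c * a)) * (c * a) + (- (c * a))\<^sup>2 * 1"
      unfolding sq2(1)[OF m(2,1) i(2,1)] gt2 gf f2 ..
    also have "\<dots> = a\<^sup>2 * (1 - c\<^sup>2)" unfolding a0(2)[symmetric] by (simp add: power2_eq_square algebra_simps)
    finally show ?thesis unfolding a0(2) .
  qed
  have w2: "(\<integral>x. (1 * q x + (- s) * f x)\<^sup>2 \<partial>M) = \<sigma>\<^sup>2 - s\<^sup>2"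
  proof -
    have "(\<integral>x. (1 * q x + (- s) * f x)\<^sup>2 \<partial>M) = 1\<^sup>2 * \<sigma>\<^sup>2 + 2 * 1 * (- s) * s + (- s)\<^sup>2 * 1"
      unfolding sq2(1)[OF m(3,1) i(3,1)] q2 f2 s_def[symmetric] ..
    also have "\<dots> = \<sigma>\<^sup>2 - s\<^sup>2" by (simp add: power2_eq_square algebra_simps)
    finally show ?thesis .
  qed
  have "X\<^sup>2 \<le> (V * (1 - c\<^sup>2)) * (\<sigma>\<^sup>2 - s\<^sup>2)"
    unfolding X_def r2[symmetric] w2[symmetric]
    by (rule cauchy_schwarz_int) (rule sq2; fact)+
  then have "sqrt (X\<^sup>2) \<le> sqrt ((V * (1 - c\<^sup>2)) * (\<sigma>\<^sup>2 - s\<^sup>2))" by (rule real_sqrt_le_mono)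
  then have "X \<le> a * sqrt (1 - c\<^sup>2) * sqrt (\<sigma>\<^sup>2 - s\<^sup>2)"
    by (simp add: a_def real_sqrt_mult)
  then have up: "(\<integral>x. gt x * q x \<partial>M) \<le> a * (c * s + sqrt (1 - c\<^sup>2) * sqrt (\<sigma>\<^sup>2 - s\<^sup>2))"
    unfolding X by (simp add: algebra_simps)
  have R: "c * s + sqrt (1 - c\<^sup>2) * sqrt (\<sigma>\<^sup>2 - s\<^sup>2) \<le>
      c * (\<sigma> - el / (2 * \<sigma>)) + sqrt (1 - c\<^sup>2) * sqrt (el - el\<^sup>2 / (4 * \<sigma>\<^sup>2))"
    unfolding el_def by (rule R1[OF sp c0 c1 ss slo ep])
  have "(\<integral>x. gt x * q x \<partial>M) \<le> a * (c * (\<sigma> - el / (2 * \<sigma>)) + sqrt (1 - c\<^sup>2) * sqrt (el - el\<^sup>2 / (4 * \<sigma>\<^sup>2)))"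
    using up mult_left_mono[OF R a0(1)] by linarith
  moreover have e: "sqrt (V * (1 - c\<^sup>2)) = a * sqrt (1 - c\<^sup>2)" by (simp add: a_def real_sqrt_mult)
  ultimately show ?thesis unfolding e a_def[symmetric] by (simp add: algebra_simps)
qed

lemma lower_core:
  fixes f gt :: "'a \<Rightarrow> real"
  assumes m: "f \<in> borel_measurable M" "gt \<in> borel_measurable M"
    and i: "integrable M (\<lambda>x. (f x)\<^sup>2)" "integrable M (\<lambda>x. (gt x)\<^sup>2)"
    and f2: "(\<integral>x. (f x)\<^sup>2 \<partial>M) = 1" and gt2: "(\<integral>x. (gt x)\<^sup>2 \<partial>M) = V"
    and fg: "(\<integral>x. f x * gt x \<partial>M) = c * sqrt V" and c0: "0 \<le> c" and c1: "c \<le> 1"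
    and sp: "\<sigma> > 0" and ep: "eps > 0"
  defines "el \<equiv> min eps (2 * \<sigma>\<^sup>2 * (1 - c))"
  defines "s1 \<equiv> \<sigma> - el / (2 * \<sigma>)"
  defines "t1 \<equiv> sqrt (el - el\<^sup>2 / (4 * \<sigma>\<^sup>2))"
  obtains \<alpha> \<beta> where "0 \<le> \<alpha>" "0 \<le> \<beta>"
    "(\<integral>x. (\<alpha> * f x + \<beta> * gt x)\<^sup>2 \<partial>M) = \<sigma>\<^sup>2"
    "(\<integral>x. (\<alpha> * f x + \<beta> * gt x - \<sigma> * f x)\<^sup>2 \<partial>M) \<le> eps"
    "(\<integral>x. gt x * (\<alpha> * f x + \<beta> * gt x) \<partial>M) = s1 * sqrt V * c + t1 * sqrt (V * (1 - c\<^sup>2))"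
proof -
  note sf = s1_facts[OF sp c0 c1 ep, folded el_def, folded s1_def, folded t1_def]
  have V0: "0 \<le> V" using gt2[symmetric] by simp
  define a where "a = sqrt V"
  have a0: "0 \<le> a" "a\<^sup>2 = V" using V0 by (auto simp: a_def)
  define k where "k = sqrt (1 - c\<^sup>2)"
  have c2: "c\<^sup>2 \<le> 1" using power_le_one[OF c0 c1, of 2] .
  have k0: "0 \<le> k" "k\<^sup>2 = 1 - c\<^sup>2" unfolding k_def using c2 by simp_all
  have gf: "(\<integral>x. gt x * f x \<partial>M) = c * a" using fg int_comm[where a=f and b=gt] by (simp add: a_def)
  have sqV: "sqrt (V * (1 - c\<^sup>2)) = a * k" by (simp add: a_def k_def real_sqrt_mult)
  have Q: "(\<integral>x. (\<alpha> * f x + \<beta> * gt x)\<^sup>2 \<partial>M) = \<alpha>\<^sup>2 + 2 * \<alpha> * \<beta> * (c * a) + \<beta>\<^sup>2 * a\<^sup>2" for \<alpha> \<beta>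
    unfolding sq2(1)[OF m i] f2 fg gt2 a0(2) a_def[symmetric] by simp
  have Qd: "(\<integral>x. (\<alpha> * f x + \<beta> * gt x - \<sigma> * f x)\<^sup>2 \<partial>M) = (\<alpha> - \<sigma>)\<^sup>2 + 2 * (\<alpha> - \<sigma>) * \<beta> * (c * a) + \<beta>\<^sup>2 * a\<^sup>2" for \<alpha> \<beta>
  proof -
    have "(\<integral>x. (\<alpha> * f x + \<beta> * gt x - \<sigma> * f x)\<^sup>2 \<partial>M) = (\<integral>x. ((\<alpha> - \<sigma>) * f x + \<beta> * gt x)\<^sup>2 \<partial>M)"
      by (simp add: algebra_simps)
    also have "\<dots> = (\<alpha> - \<sigma>)\<^sup>2 + 2 * (\<alpha> - \<sigma>) * \<beta> * (c * a) + \<beta>\<^sup>2 * a\<^sup>2" by (rule Q)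
    finally show ?thesis .
  qed
  have G: "(\<integral>x. gt x * (\<alpha> * f x + \<beta> * gt x) \<partial>M) = \<alpha> * (c * a) + \<beta> * a\<^sup>2" for \<alpha> \<beta>
  proof -
    have "(\<integral>x. gt x * (\<alpha> * f x + \<beta> * gt x) \<partial>M) = (\<integral>x. (\<alpha> * f x + \<beta> * gt x) * gt x \<partial>M)"
      by (rule int_comm)
    also have "\<dots> = \<alpha> * (c * a) + \<beta> * a\<^sup>2"
      unfolding lin2[OF m m(2) i i(2)] fg gt2[unfolded power2_eq_square] a0(2)[symmetric] a_def[symmetric]
      using a0(1) by (simp add: power2_eq_square)
    finally show ?thesis .
  qed
  show ?thesis
  proof (cases "a > 0 \<and> k > 0")
    case True
    then have ap: "a > 0" and kp: "k > 0" by auto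
    define \<alpha> where "\<alpha> = s1 - t1 * c / k"
    define \<beta> where "\<beta> = t1 / (k * a)"
    have I1: "\<alpha> + \<beta> * (c * a) = s1" unfolding \<alpha>_def \<beta>_def using ap kp by (simp add: field_simps)
    have I2: "\<beta>\<^sup>2 * a\<^sup>2 * k\<^sup>2 = t1\<^sup>2" unfolding \<beta>_def using ap kp by (simp add: field_simps power2_eq_square)
    have al: "0 \<le> \<alpha>"
    proof -
      have "t1 * c / k \<le> s1" using sf(6) kp by (simp add: k_def[symmetric] divide_le_eq mult.commute)
      then show ?thesis unfolding \<alpha>_def by simp
    qed
    have be: "0 \<le> \<beta>" unfolding \<beta>_def using sf(5) ap kp by simp
    have id1: "x\<^sup>2 + 2 * x * \<beta> * (c * a) + \<beta>\<^sup>2 * a\<^sup>2 = (x + \<beta> * (c * a))\<^sup>2 + \<beta>\<^sup>2 * a\<^sup>2 * (1 - c\<^sup>2)" for x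
      by (simp add: power2_eq_square algebra_simps)
    show ?thesis
    proof (rule that[OF al be])
      show "(\<integral>x. (\<alpha> * f x + \<beta> * gt x)\<^sup>2 \<partial>M) = \<sigma>\<^sup>2"
        unfolding Q id1 I1 k0(2)[symmetric] I2 using sf(10) by simp
      have "(\<integral>x. (\<alpha> * f x + \<beta> * gt x - \<sigma> * f x)\<^sup>2 \<partial>M) = (s1 - \<sigma>)\<^sup>2 + t1\<^sup>2"
        unfolding Qd id1 k0(2)[symmetric] I2 using I1 by (simp add: algebra_simps)
      also have "\<dots> = el" using sf(10) sf(9) by (simp add: power2_eq_square algebra_simps)
      finally show "(\<integral>x. (\<alpha> * f x + \<beta> * gt x - \<sigma> * f x)\<^sup>2 \<partial>M) \<le> eps" using sf(8) by simp
      have "\<alpha> * c + \<beta> * a = c * s1 + t1 * k"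
      proof -
        have "\<alpha> * c + \<beta> * a = c * s1 + t1 * (1 - c\<^sup>2) / k" unfolding \<alpha>_def \<beta>_def using ap kp
          by (simp add: field_simps power2_eq_square)
        also have "\<dots> = c * s1 + t1 * k" unfolding k0(2)[symmetric] using kp by (simp add: power2_eq_square)
        finally show ?thesis .
      qed
      then have "\<alpha> * (c * a) + \<beta> * a\<^sup>2 = a * (c * s1 + t1 * k)"
        by (metis (no_types, opaque_lifting) distrib_left mult.commute mult.left_commute power2_eq_square)
      also have "\<dots> = s1 * a * c + t1 * (a * k)" by (simp add: algebra_simps)
      finally show "(\<integral>x. gt x * (\<alpha> * f x + \<beta> * gt x) \<partial>M) = s1 * sqrt V * c + t1 * sqrt (V * (1 - c\<^sup>2))"
        unfolding G sqV a_def[symmetric] .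
    qed
  next
    case False
    then have ak: "a = 0 \<or> k = 0" using a0 k0 by auto
    show ?thesis
    proof (rule that[of \<sigma> 0])
      show "0 \<le> \<sigma>" using sp by simp
      show "(0::real) \<le> 0" by simp
      show "(\<integral>x. (\<sigma> * f x + 0 * gt x)\<^sup>2 \<partial>M) = \<sigma>\<^sup>2" unfolding Q by simp
      show "(\<integral>x. (\<sigma> * f x + 0 * gt x - \<sigma> * f x)\<^sup>2 \<partial>M) \<le> eps" using ep by simp
      show "(\<integral>x. gt x * (\<sigma> * f x + 0 * gt x) \<partial>M) = s1 * sqrt V * c + t1 * sqrt (V * (1 - c\<^sup>2))"
        unfolding G sqV a_def[symmetric]
      proof (cases "a = 0")
        case True then show "\<sigma> * (c * a) + 0 * a\<^sup>2 = s1 * a * c + t1 * (a * k)" by simp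
      next
        case False
        then have k: "k = 0" using ak by simp
        then have "c\<^sup>2 = 1" using k0 by simp
        then have c: "c = 1" using c0 by (simp add: power2_eq_1_iff)
        then have "el = 0" unfolding el_def using ep by simp
        then have "s1 = \<sigma>" "t1 = 0" unfolding s1_def t1_def by simp_all
        then show "\<sigma> * (c * a) + 0 * a\<^sup>2 = s1 * a * c + t1 * (a * k)" using c by simp
      qed
    qed
  qed
qed

lemma inner_sum_real: "x \<bullet> (r :: real^'n) = (\<Sum>i\<in>UNIV. x $ i * r $ i)"
  by (simp add: inner_vec_def)

lemma quad_form: "x \<bullet> (Sig *v x) = (\<Sum>i\<in>UNIV. \<Sum>j\<in>UNIV. x $ i * x $ j * Sig $ i $ j)"
  for x :: "real^'n"
  by (simp add: inner_vec_def matrix_vector_mult_def sum_distrib_left algebra_simps)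

lemma abs_le_1_sq: "\<bar>y\<bar> \<le> 1 + y\<^sup>2" for y :: real
proof (cases "\<bar>y\<bar> \<le> 1")
  case True
  have "0 \<le> y\<^sup>2" by simp
  then show ?thesis using True by linarith
next
  case False
  then have "\<bar>y\<bar> * 1 \<le> \<bar>y\<bar> * \<bar>y\<bar>" by (intro mult_left_mono) auto
  then have "\<bar>y\<bar> \<le> y\<^sup>2" by (simp add: power2_eq_square abs_mult_self_eq)
  then show ?thesis by linarith
qed

lemma Mset_moments:
  fixes GR :: "(real^'n) measure"
  assumes GR: "GR \<in> Mset mu Sig"
  shows "prob_space GR" "sets GR = sets borel"
    and "(\<lambda>r. - (x \<bullet> r)) \<in> borel_measurable GR"
    and "integrable GR (\<lambda>r. (- (x \<bullet> r))\<^sup>2)"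
    and "integrable GR (\<lambda>r. - (x \<bullet> r))"
    and "(\<integral>r. - (x \<bullet> r) \<partial>GR) = - (x \<bullet> mu)"
    and "(\<integral>r. (- (x \<bullet> r) + x \<bullet> mu)\<^sup>2 \<partial>GR) = x \<bullet> (Sig *v x)"
proof -
  from GR have P: "prob_space GR" and S: "sets GR = sets borel"
    and sq: "\<And>i. integrable GR (\<lambda>r. (r $ i)\<^sup>2)"
    and mean: "\<And>i. (\<integral>r. r $ i \<partial>GR) = mu $ i"
    and cov: "\<And>i j. (\<integral>r. (r $ i - mu $ i) * (r $ j - mu $ j) \<partial>GR) = Sig $ i $ j"
    unfolding Mset_def by auto
  interpret prob_space GR by (rule P)
  show "prob_space GR" "sets GR = sets borel" by (rule P, rule S)
  have mc: "(\<lambda>r. r $ i) \<in> borel_measurable GR" for i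
    unfolding measurable_cong_sets[OF S refl] by (intro borel_measurable_continuous_onI continuous_intros)
  have ic: "integrable GR (\<lambda>r. r $ i)" for i
  proof (rule Bochner_Integration.integrable_bound[where f="\<lambda>r. 1 + (r $ i)\<^sup>2"])
    show "integrable GR (\<lambda>r. 1 + (r $ i)\<^sup>2)" using sq by simp
    show "(\<lambda>r. r $ i) \<in> borel_measurable GR" by (rule mc)
    show "AE r in GR. norm (r $ i) \<le> norm (1 + (r $ i)\<^sup>2)"
    proof (rule AE_I2)
      fix r :: "real^'n"
      have "\<bar>r $ i\<bar> \<le> 1 + (r $ i)\<^sup>2" by (rule abs_le_1_sq)
      then show "norm (r $ i) \<le> norm (1 + (r $ i)\<^sup>2)" by simp
    qed
  qed
  have icc: "integrable GR (\<lambda>r. r $ i * r $ j)" for i j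
    by (rule sq_integrable_prod[OF mc mc sq sq])
  have L: "(\<lambda>r. - (x \<bullet> r)) = (\<lambda>r. - (\<Sum>i\<in>UNIV. x $ i * r $ i))" by (simp add: inner_sum_real)
  show "(\<lambda>r. - (x \<bullet> r)) \<in> borel_measurable GR" unfolding L using mc by measurable
  show "integrable GR (\<lambda>r. - (x \<bullet> r))" unfolding L using ic by simp
  show "(\<integral>r. - (x \<bullet> r) \<partial>GR) = - (x \<bullet> mu)" unfolding L inner_sum_real[of x mu] using ic mean
    by (simp add: integral_sum)
  have L2: "(\<lambda>r. (- (x \<bullet> r))\<^sup>2) = (\<lambda>r. \<Sum>i\<in>UNIV. \<Sum>j\<in>UNIV. x $ i * x $ j * (r $ i * r $ j))"
    by (simp add: inner_sum_real power2_eq_square sum_product algebra_simps)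
  show "integrable GR (\<lambda>r. (- (x \<bullet> r))\<^sup>2)" unfolding L2 using icc by simp
  have cc: "integrable GR (\<lambda>r. (r $ i - mu $ i) * (r $ j - mu $ j))" for i j
  proof -
    have "(\<lambda>r. (r $ i - mu $ i) * (r $ j - mu $ j)) = (\<lambda>r. r $ i * r $ j - mu $ j * r $ i - mu $ i * r $ j + mu $ i * mu $ j)"
      by (simp add: algebra_simps)
    then show ?thesis using icc ic by simp
  qed
  have L3: "(\<lambda>r. (- (x \<bullet> r) + x \<bullet> mu)\<^sup>2) = (\<lambda>r. \<Sum>i\<in>UNIV. \<Sum>j\<in>UNIV. x $ i * x $ j * ((r $ i - mu $ i) * (r $ j - mu $ j)))"
  proof
    fix r :: "real^'n"
    have "- (x \<bullet> r) + x \<bullet> mu = - (\<Sum>i\<in>UNIV. x $ i * (r $ i - mu $ i))"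
      by (simp add: inner_sum_real sum_subtractf right_diff_distrib)
    then have "(- (x \<bullet> r) + x \<bullet> mu)\<^sup>2 = (\<Sum>i\<in>UNIV. x $ i * (r $ i - mu $ i)) * (\<Sum>j\<in>UNIV. x $ j * (r $ j - mu $ j))"
      by (simp add: power2_eq_square)
    also have "\<dots> = (\<Sum>i\<in>UNIV. \<Sum>j\<in>UNIV. (x $ i * (r $ i - mu $ i)) * (x $ j * (r $ j - mu $ j)))"
      by (rule sum_product)
    also have "\<dots> = (\<Sum>i\<in>UNIV. \<Sum>j\<in>UNIV. x $ i * x $ j * ((r $ i - mu $ i) * (r $ j - mu $ j)))"
      by (simp add: ac_simps)
    finally show "(- (x \<bullet> r) + x \<bullet> mu)\<^sup>2 = (\<Sum>i\<in>UNIV. \<Sum>j\<in>UNIV. x $ i * x $ j * ((r $ i - mu $ i) * (r $ j - mu $ j)))" .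
  qed
  show "(\<integral>r. (- (x \<bullet> r) + x \<bullet> mu)\<^sup>2 \<partial>GR) = x \<bullet> (Sig *v x)"
    unfolding L3 quad_form using cc cov by (simp add: integral_sum)
qed

definition qf :: "real^'n^'n \<Rightarrow> real^'n \<Rightarrow> real" where
  "qf C v = (\<Sum>j\<in>UNIV. \<Sum>k\<in>UNIV. v $ j * v $ k * C $ j $ k)"

lemma qf_eq: "v \<bullet> (C *v v) = qf C v"
  unfolding qf_def by (rule quad_form)

lemma sd1: "(\<Sum>j\<in>(UNIV::'n::finite set). \<Sum>k\<in>(UNIV::'n set). (if j = a then f j k else 0::real)) = (\<Sum>k\<in>UNIV. f a k)"
proof -
  have "(\<Sum>k\<in>UNIV. (if j = a then f j k else 0::real)) = (if j = a then (\<Sum>k\<in>UNIV. f j k) else 0)" for j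
    by (cases "j = a") simp_all
  then show ?thesis by (simp add: sum.delta)
qed

lemma sd2: "(\<Sum>j\<in>(UNIV::'n::finite set). \<Sum>k\<in>(UNIV::'n set). (if k = a then f j k else 0::real)) = (\<Sum>j\<in>UNIV. f j a)"
  by (simp add: sum.delta)

lemma sum4: "(\<Sum>j\<in>A. \<Sum>k\<in>B. a j k - t * b j k - t * d j k + t2 * e j k) =
  (\<Sum>j\<in>A. \<Sum>k\<in>B. a j k) - t * (\<Sum>j\<in>A. \<Sum>k\<in>B. b j k) - t * (\<Sum>j\<in>A. \<Sum>k\<in>B. d j k)
  + t2 * (\<Sum>j\<in>A. \<Sum>k\<in>B. e j k)" for a b d e :: "'a \<Rightarrow> 'b \<Rightarrow> real"
  by (simp add: sum.distrib sum_subtractf sum_distrib_left)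

lemma qf_shift:
  fixes C :: "real^'n^'n"
  assumes sym: "\<And>i j. C $ i $ j = C $ j $ i"
  shows "qf C (v - t *\<^sub>R axis i0 1) = qf C v - 2 * t * (\<Sum>j\<in>UNIV. v $ j * C $ j $ i0) + t\<^sup>2 * C $ i0 $ i0"
proof -
  have e: "(v - t *\<^sub>R axis i0 1) $ j = v $ j - t * (if j = i0 then 1 else 0)" for j
    by (simp add: axis_def)
  have "qf C (v - t *\<^sub>R axis i0 1) = (\<Sum>j\<in>UNIV. \<Sum>k\<in>UNIV.
      v $ j * v $ k * C $ j $ k - t * (if j = i0 then v $ k * C $ j $ k else 0)
      - t * (if k = i0 then v $ j * C $ j $ k else 0)
      + t\<^sup>2 * (if j = i0 then (if k = i0 then C $ j $ k else 0) else 0))"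
    unfolding qf_def e by (intro sum.cong refl) (simp add: algebra_simps power2_eq_square)
  also have "\<dots> = qf C v - t * (\<Sum>j\<in>UNIV. \<Sum>k\<in>UNIV. (if j = i0 then v $ k * C $ j $ k else 0))
      - t * (\<Sum>j\<in>UNIV. \<Sum>k\<in>UNIV. (if k = i0 then v $ j * C $ j $ k else 0))
      + t\<^sup>2 * (\<Sum>j\<in>UNIV. \<Sum>k\<in>UNIV. (if j = i0 then (if k = i0 then C $ j $ k else 0) else 0))"
    unfolding qf_def by (rule sum4)
  also have "\<dots> = qf C v - t * (\<Sum>k\<in>UNIV. v $ k * C $ i0 $ k) - t * (\<Sum>j\<in>UNIV. v $ j * C $ j $ i0)
      + t\<^sup>2 * C $ i0 $ i0"
    unfolding sd1 sd2 by simp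
  also have "(\<Sum>k\<in>UNIV. v $ k * C $ i0 $ k) = (\<Sum>j\<in>UNIV. v $ j * C $ j $ i0)" using sym by simp
  finally show ?thesis by simp
qed

lemma qf_zero: "qf C 0 = 0" by (simp add: qf_def)

lemma qf_axis: "(\<And>i j. C $ i $ j = C $ j $ i) \<Longrightarrow> qf C (axis i0 1) = C $ i0 $ i0"
  using qf_shift[of C 0 "-1" i0] by (simp add: qf_zero)

lemma sum_axis: "(\<Sum>j\<in>UNIV. axis k 1 $ j * C $ j $ i0) = C $ k $ i0" for C :: "real^'n^'n"
proof -
  have "(\<lambda>j. axis k 1 $ j * C $ j $ i0) = (\<lambda>j. if j = k then C $ j $ i0 else 0)"
    by (auto simp: axis_def)
  show ?thesis unfolding \<open>(\<lambda>j. axis k 1 $ j * C $ j $ i0) = (\<lambda>j. if j = k then C $ j $ i0 else 0)\<close> by simp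
qed

lemma psd_decomp_aux:
  fixes S :: "'n::finite set"
  assumes "finite S"
  shows "\<forall>C :: real^'n^'n. (\<forall>i j. C $ i $ j = C $ j $ i) \<longrightarrow> (\<forall>v. 0 \<le> qf C v) \<longrightarrow>
     (\<forall>i j. i \<notin> S \<longrightarrow> C $ i $ j = 0) \<longrightarrow> (\<exists>vs. \<forall>i j. C $ i $ j = (\<Sum>v\<leftarrow>vs. v $ i * v $ j))"
  using assms
proof (induction S rule: finite_induct)
  case empty
  show ?case
  proof (intro allI impI)
    fix C :: "real^'n^'n" assume "\<forall>i j. i \<notin> {} \<longrightarrow> C $ i $ j = 0"
    then show "\<exists>vs. \<forall>i j. C $ i $ j = (\<Sum>v\<leftarrow>vs. v $ i * v $ j)" by (intro exI[of _ "[]"]) simp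
  qed
next
  case (insert i0 S)
  show ?case
  proof (intro allI impI)
    fix C :: "real^'n^'n"
    assume sym: "\<forall>i j. C $ i $ j = C $ j $ i" and psd: "\<forall>v. 0 \<le> qf C v"
      and supp: "\<forall>i j. i \<notin> insert i0 S \<longrightarrow> C $ i $ j = 0"
    have sym': "\<And>i j. C $ i $ j = C $ j $ i" using sym by blast
    define d where "d = C $ i0 $ i0"
    have d0: "0 \<le> d" unfolding d_def using psd qf_axis[OF sym', of i0] by metis
    show "\<exists>vs. \<forall>i j. C $ i $ j = (\<Sum>v\<leftarrow>vs. v $ i * v $ j)"
    proof (cases "d = 0")
      case True
      have row: "C $ k $ i0 = 0" for k
      proof (rule ccontr)
        assume b: "C $ k $ i0 \<noteq> 0"
        define t where "t = (C $ k $ k + 1) / (2 * C $ k $ i0)"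
        have "qf C (axis k 1 - t *\<^sub>R axis i0 1) = C $ k $ k - 2 * t * C $ k $ i0"
          using qf_shift[OF sym', of "axis k 1" t i0] qf_axis[OF sym', of k] sum_axis[of k C i0] True
          by (simp add: d_def)
        also have "\<dots> = -1" using b by (simp add: t_def field_simps)
        finally show False using psd by (metis neg_0_le_iff_le not_one_le_zero)
      qed
      have "\<forall>i j. i \<notin> S \<longrightarrow> C $ i $ j = 0"
      proof (intro allI impI)
        fix i j assume "i \<notin> S"
        show "C $ i $ j = 0"
        proof (cases "i = i0")
          case True then show ?thesis using row[of j] sym' by simp
        next
          case False then show ?thesis using supp \<open>i \<notin> S\<close> by simp
        qed
      qed
      then show ?thesis using insert.IH sym psd by blast
    next
      case False
      then have dp: "d > 0" using d0 by simp
      define w :: "real^'n" where "w = (\<chi> j. C $ j $ i0 / sqrt d)"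
      define C' :: "real^'n^'n" where "C' = (\<chi> j k. C $ j $ k - w $ j * w $ k)"
      have ww: "w $ j * w $ k = C $ j $ i0 * C $ k $ i0 / d" for j k
        unfolding w_def using dp by (simp add: real_sqrt_mult[symmetric] power2_eq_square)
      have C'e: "C' $ j $ k = C $ j $ k - C $ j $ i0 * C $ k $ i0 / d" for j k
        unfolding C'_def using ww by simp
      have sym2: "\<forall>i j. C' $ i $ j = C' $ j $ i" unfolding C'e using sym' by (simp add: mult.commute)
      have supp2: "\<forall>i j. i \<notin> S \<longrightarrow> C' $ i $ j = 0"
      proof (intro allI impI)
        fix i j assume iS: "i \<notin> S"
        show "C' $ i $ j = 0"
        proof (cases "i = i0")
          case True
          then show ?thesis unfolding C'e using dp sym'[of j i0] by (simp add: d_def)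
        next
          case False
          then have "C $ i $ j = 0" "C $ i $ i0 = 0" using supp iS by auto
          then show ?thesis unfolding C'e by simp
        qed
      qed
      have psd2: "\<forall>v. 0 \<le> qf C' v"
      proof
        fix v :: "real^'n"
        define p where "p = (\<Sum>j\<in>UNIV. v $ j * C $ j $ i0)"
        have "qf C' v = qf C v - (\<Sum>j\<in>UNIV. \<Sum>k\<in>UNIV. v $ j * v $ k * (C $ j $ i0 * C $ k $ i0 / d))"
          unfolding qf_def C'e by (simp add: algebra_simps sum_subtractf)
        also have "(\<Sum>j\<in>UNIV. \<Sum>k\<in>UNIV. v $ j * v $ k * (C $ j $ i0 * C $ k $ i0 / d)) = p * p / d"
          unfolding p_def by (simp add: sum_product sum_divide_distrib algebra_simps)
        finally have e1: "qf C' v = qf C v - p * p / d" .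
        have "qf C (v - (p / d) *\<^sub>R axis i0 1) = qf C v - 2 * (p / d) * p + (p / d)\<^sup>2 * d"
          using qf_shift[OF sym', of v "p / d" i0] by (simp add: p_def d_def)
        also have "\<dots> = qf C v - p * p / d" using dp by (simp add: power2_eq_square field_simps)
        finally have "qf C' v = qf C (v - (p / d) *\<^sub>R axis i0 1)" using e1 by simp
        then show "0 \<le> qf C' v" using psd by simp
      qed
      obtain vs where vs: "\<forall>i j. C' $ i $ j = (\<Sum>v\<leftarrow>vs. v $ i * v $ j)"
        using insert.IH sym2 psd2 supp2 by blast
      show ?thesis
      proof (intro exI[of _ "w # vs"] allI)
        fix i j
        have "C $ i $ j = C' $ i $ j + w $ i * w $ j" unfolding C'_def by simp
        then show "C $ i $ j = (\<Sum>v\<leftarrow>w # vs. v $ i * v $ j)" using vs by simp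
      qed
    qed
  qed
qed

lemma psd_decomp:
  fixes C :: "real^'n^'n"
  assumes "\<And>i j. C $ i $ j = C $ j $ i" "\<And>v. 0 \<le> qf C v"
  obtains vs where "\<And>i j. C $ i $ j = (\<Sum>v\<leftarrow>vs. v $ i * v $ j)"
proof -
  have "\<exists>vs. \<forall>i j. C $ i $ j = (\<Sum>v\<leftarrow>vs. v $ i * v $ j)"
    using psd_decomp_aux[of "UNIV :: 'n set"] assms by auto
  then show ?thesis using that by blast
qed

lemma integrable_ucm: "finite A \<Longrightarrow> integrable (uniform_count_measure A) (f :: 'a \<Rightarrow> real)"
  unfolding uniform_count_measure_def by (rule integrable_point_measure_finite)

lemma prod_int:
  fixes F :: "real \<times> 'a \<Rightarrow> real"
  assumes A: "finite A" "A \<noteq> {}"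
    and Fm: "F \<in> borel_measurable (M01 \<Otimes>\<^sub>M uniform_count_measure A)"
    and Fi: "\<And>a. a \<in> A \<Longrightarrow> integrable M01 (\<lambda>u. F (u, a))"
  shows "integrable (M01 \<Otimes>\<^sub>M uniform_count_measure A) F"
    and "integral\<^sup>L (M01 \<Otimes>\<^sub>M uniform_count_measure A) F = (\<Sum>a\<in>A. integral\<^sup>L M01 (\<lambda>u. F (u, a))) / card A"
proof -
  interpret P1: prob_space M01 by (rule prob_M01)
  interpret P2: prob_space "uniform_count_measure A" by (rule prob_space_uniform_count_measure[OF A])
  interpret PP: pair_sigma_finite M01 "uniform_count_measure A" ..
  have inner: "(\<integral>a. G a \<partial>uniform_count_measure A) = (\<Sum>a\<in>A. G a) / card A" for G :: "'a \<Rightarrow> real"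
    by (rule integral_uniform_count_measure[OF A(1)])
  show int: "integrable (M01 \<Otimes>\<^sub>M uniform_count_measure A) F"
  proof (rule PP.Fubini_integrable[OF Fm])
    show "integrable M01 (\<lambda>u. \<integral>a. norm (F (u, a)) \<partial>uniform_count_measure A)"
      unfolding inner using Fi A by (intro integrable_divide integrable_sum) auto
    show "AE u in M01. integrable (uniform_count_measure A) (\<lambda>a. F (u, a))"
      using A by (intro AE_I2 integrable_ucm)
  qed
  have "integral\<^sup>L (M01 \<Otimes>\<^sub>M uniform_count_measure A) F = (\<integral>u. (\<integral>a. F (u, a) \<partial>uniform_count_measure A) \<partial>M01)"
    by (rule PP.integral_fst'[OF int, symmetric])
  also have "\<dots> = (\<integral>u. (\<Sum>a\<in>A. F (u, a)) / card A \<partial>M01)" unfolding inner ..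
  also have "\<dots> = (\<Sum>a\<in>A. integral\<^sup>L M01 (\<lambda>u. F (u, a))) / card A"
    using Fi by (simp add: integral_sum)
  finally show "integral\<^sup>L (M01 \<Otimes>\<^sub>M uniform_count_measure A) F = (\<Sum>a\<in>A. integral\<^sup>L M01 (\<lambda>u. F (u, a))) / card A" .
qed

lemma meas_ucm: "(f :: 'a \<Rightarrow> 'b) \<in> measurable (uniform_count_measure A) (borel :: 'b::topological_space measure)"
  by (simp add: measurable_cong_sets[OF sets_uniform_count_measure_count_space refl])

lemma Zlin:
  fixes Z :: "real \<Rightarrow> real"
  assumes Zm: "Z \<in> borel_measurable M01" and Z2: "integrable M01 (\<lambda>u. (Z u)\<^sup>2)"
    and Z1: "integral\<^sup>L M01 Z = 0" and Zs: "integral\<^sup>L M01 (\<lambda>u. (Z u)\<^sup>2) = s2"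
  shows "integrable M01 (\<lambda>u. (a0 + b0 * Z u) * (c0 + d0 * Z u))"
    and "integral\<^sup>L M01 (\<lambda>u. (a0 + b0 * Z u) * (c0 + d0 * Z u)) = a0 * c0 + b0 * d0 * s2"
    and "integrable M01 (\<lambda>u. a0 + b0 * Z u)"
    and "integral\<^sup>L M01 (\<lambda>u. a0 + b0 * Z u) = a0"
proof -
  interpret P: prob_space M01 by (rule prob_M01)
  have Zi: "integrable M01 Z"
  proof (rule Bochner_Integration.integrable_bound[where f="\<lambda>u. 1 + (Z u)\<^sup>2"])
    show "integrable M01 (\<lambda>u. 1 + (Z u)\<^sup>2)" using Z2 by simp
    show "AE u in M01. norm (Z u) \<le> norm (1 + (Z u)\<^sup>2)"
      using abs_le_1_sq by (intro AE_I2) (simp add: abs_le_1_sq)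
  qed (rule Zm)
  have e: "(\<lambda>u. (a0 + b0 * Z u) * (c0 + d0 * Z u)) = (\<lambda>u. a0 * c0 + (a0 * d0 + b0 * c0) * Z u + b0 * d0 * (Z u)\<^sup>2)"
    by (simp add: power2_eq_square algebra_simps)
  show "integrable M01 (\<lambda>u. (a0 + b0 * Z u) * (c0 + d0 * Z u))" unfolding e using Zi Z2 by simp
  show "integral\<^sup>L M01 (\<lambda>u. (a0 + b0 * Z u) * (c0 + d0 * Z u)) = a0 * c0 + b0 * d0 * s2"
    unfolding e using Zi Z2 Z1 Zs P.prob_space by simp
  show "integrable M01 (\<lambda>u. a0 + b0 * Z u)" using Zi by simp
  show "integral\<^sup>L M01 (\<lambda>u. a0 + b0 * Z u) = a0" using Zi Z1 P.prob_space by simp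
qed

lemma qf_lin:
  fixes S :: "real^'n^'n"
  assumes sym: "\<And>i j. S $ i $ j = S $ j $ i"
  shows "qf S (v - t *\<^sub>R y) = qf S v - 2 * t * (\<Sum>j\<in>UNIV. v $ j * (S *v y) $ j) + t\<^sup>2 * qf S y"
proof -
  have "qf S (v - t *\<^sub>R y) = (\<Sum>j\<in>UNIV. \<Sum>k\<in>UNIV.
      v $ j * v $ k * S $ j $ k - t * (v $ j * y $ k * S $ j $ k) - t * (y $ j * v $ k * S $ j $ k)
      + t\<^sup>2 * (y $ j * y $ k * S $ j $ k))"
    unfolding qf_def by (intro sum.cong refl) (simp add: algebra_simps power2_eq_square)
  also have "\<dots> = qf S v - t * (\<Sum>j\<in>UNIV. \<Sum>k\<in>UNIV. v $ j * y $ k * S $ j $ k)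
     - t * (\<Sum>j\<in>UNIV. \<Sum>k\<in>UNIV. y $ j * v $ k * S $ j $ k) + t\<^sup>2 * qf S y"
    unfolding qf_def by (rule sum4)
  also have "(\<Sum>j\<in>UNIV. \<Sum>k\<in>UNIV. y $ j * v $ k * S $ j $ k) = (\<Sum>j\<in>UNIV. \<Sum>k\<in>UNIV. v $ j * y $ k * S $ j $ k)"
    by (subst sum.swap) (simp add: sym mult.commute)
  also have "(\<Sum>j\<in>UNIV. \<Sum>k\<in>UNIV. v $ j * y $ k * S $ j $ k) = (\<Sum>j\<in>UNIV. v $ j * (S *v y) $ j)"
    by (simp add: matrix_vector_mult_def sum_distrib_left algebra_simps)
  finally show ?thesis by simp
qed

lemma sum_bool: "(\<Sum>b\<in>(UNIV::bool set). f b) = f True + f False" for f :: "bool \<Rightarrow> real"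
  by (simp add: UNIV_bool)

definition Wf :: "nat \<Rightarrow> (nat \<Rightarrow> real^'n) \<Rightarrow> nat \<times> bool \<Rightarrow> real^'n" where
  "Wf N V a = ((if snd a then 1 else -1) * sqrt (real N)) *\<^sub>R V (fst a)"

lemma W_facts:
  fixes V :: "nat \<Rightarrow> real^'n"
  shows "(\<Sum>a\<in>{..<N} \<times> UNIV. Wf N V a $ i) = 0"
    and "(\<Sum>a\<in>{..<N} \<times> UNIV. Wf N V a $ i * Wf N V a $ j) = 2 * real N * (\<Sum>k<N. V k $ i * V k $ j)"
    and "card ({..<N} \<times> (UNIV :: bool set)) = 2 * N"
proof -
  have s: "(\<Sum>a\<in>{..<N} \<times> (UNIV::bool set). f a) = (\<Sum>k<N. f (k, True) + f (k, False))" for f :: "nat \<times> bool \<Rightarrow> real"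
  proof -
    have "(\<Sum>a\<in>{..<N} \<times> (UNIV::bool set). f a) = (\<Sum>k<N. \<Sum>b\<in>UNIV. f (k, b))"
      using sum.cartesian_product[of "\<lambda>k b. f (k, b)" "UNIV :: bool set" "{..<N}"] by simp
    then show ?thesis by (simp add: sum_bool)
  qed
  show "(\<Sum>a\<in>{..<N} \<times> UNIV. Wf N V a $ i) = 0" unfolding s by (simp add: Wf_def)
  show "(\<Sum>a\<in>{..<N} \<times> UNIV. Wf N V a $ i * Wf N V a $ j) = 2 * real N * (\<Sum>k<N. V k $ i * V k $ j)"
  proof -
    have r: "sqrt (real N) * (sqrt (real N) * z) = real N * z" for z
      by (simp add: mult.assoc[symmetric])
    show ?thesis unfolding s by (simp add: Wf_def sum_distrib_left algebra_simps r)
  qed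
  show "card ({..<N} \<times> (UNIV :: bool set)) = 2 * N" by (simp add: card_cartesian_product)
qed

lemma sum_list_map_nth: "(\<Sum>v\<leftarrow>xs. f v) = (\<Sum>k<length xs. f (xs ! k))" for f :: "'a \<Rightarrow> real"
proof -
  have "(\<Sum>v\<leftarrow>xs. f v) = (\<Sum>k = 0..<length (map f xs). map f xs ! k)" by (rule sum_list_sum_nth)
  also have "\<dots> = (\<Sum>k<length xs. f (xs ! k))" by (simp add: atLeast0LessThan)
  finally show ?thesis .
qed

lemma decomp_N:
  fixes C :: "real^'n^'n"
  assumes "\<And>i j. C $ i $ j = C $ j $ i" "\<And>v. 0 \<le> qf C v"
  obtains N :: nat and V :: "nat \<Rightarrow> real^'n" where "N > 0" "\<And>i j. C $ i $ j = (\<Sum>k<N. V k $ i * V k $ j)"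
proof -
  obtain vs0 where vs0: "\<And>i j. C $ i $ j = (\<Sum>v\<leftarrow>vs0. v $ i * v $ j)" using psd_decomp[OF assms] by metis
  define V where "V k = (0 # vs0) ! k" for k
  have "C $ i $ j = (\<Sum>k<Suc (length vs0). V k $ i * V k $ j)" for i j
    unfolding vs0 sum_list_map_nth sum.lessThan_Suc_shift by (simp add: V_def)
  then show ?thesis by (intro that[of "Suc (length vs0)" V]) auto
qed

lemma qf_decomp:
  fixes C :: "real^'n^'n"
  assumes "\<And>i j. C $ i $ j = (\<Sum>k<N. V k $ i * V k $ j)"
  shows "qf C x = (\<Sum>k<N. (x \<bullet> V k)\<^sup>2)"
proof -
  have "qf C x = (\<Sum>j\<in>UNIV. \<Sum>l\<in>UNIV. \<Sum>k<N. (x $ j * V k $ j) * (x $ l * V k $ l))"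
    unfolding qf_def assms by (simp add: sum_distrib_left algebra_simps)
  also have "\<dots> = (\<Sum>k<N. \<Sum>j\<in>UNIV. \<Sum>l\<in>UNIV. (x $ j * V k $ j) * (x $ l * V k $ l))"
    by (simp add: sum.swap[of _ "{..<N}"])
  also have "\<dots> = (\<Sum>k<N. (x \<bullet> V k)\<^sup>2)"
    by (simp add: inner_sum_real power2_eq_square sum_product)
  finally show ?thesis .
qed

lemma construct:
  fixes mu x :: "real^'n" and Sig :: "real^'n^'n" and Y :: "real \<Rightarrow> real"
  assumes sym: "transpose Sig = Sig" and psd: "\<forall>v. 0 \<le> v \<bullet> (Sig *v v)"
    and sp: "x \<bullet> (Sig *v x) > 0"
    and Ym: "Y \<in> borel_measurable M01" and Y2: "integrable M01 (\<lambda>u. (Y u)\<^sup>2)"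
    and Ymean: "integral\<^sup>L M01 Y = - (x \<bullet> mu)"
    and Yvar: "integral\<^sup>L M01 (\<lambda>u. (Y u + x \<bullet> mu)\<^sup>2) = x \<bullet> (Sig *v x)"
  obtains GR where "GR \<in> Mset mu Sig" "distr GR borel (\<lambda>r. - (x \<bullet> r)) = distr M01 borel Y"
proof -
  define s2 where "s2 = x \<bullet> (Sig *v x)"
  define sx where "sx = Sig *v x"
  define xm where "xm = x \<bullet> mu"
  have s2p: "s2 > 0" using sp by (simp add: s2_def)
  have symS: "\<And>i j. Sig $ i $ j = Sig $ j $ i"
  proof -
    fix i j
    have "transpose Sig $ i $ j = Sig $ j $ i" by (simp add: transpose_def)
    then show "Sig $ i $ j = Sig $ j $ i" using sym by simp
  qed
  have psdS: "0 \<le> qf Sig v" for v using psd qf_eq by metis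
  have qfx: "qf Sig x = s2" unfolding s2_def qf_eq ..
  have sxs: "(\<Sum>j\<in>UNIV. x $ j * sx $ j) = s2" by (simp add: s2_def sx_def inner_sum_real)
  define C :: "real^'n^'n" where "C = (\<chi> i j. Sig $ i $ j - sx $ i * sx $ j / s2)"
  have Ce: "C $ i $ j = Sig $ i $ j - sx $ i * sx $ j / s2" for i j by (simp add: C_def)
  have symC: "\<And>i j. C $ i $ j = C $ j $ i" using symS by (simp add: Ce mult.commute)
  have qfC: "qf C v = qf Sig v - (\<Sum>j\<in>UNIV. v $ j * sx $ j)\<^sup>2 / s2" for v
  proof -
    have "qf C v = qf Sig v - (\<Sum>j\<in>UNIV. \<Sum>k\<in>UNIV. (v $ j * sx $ j) * (v $ k * sx $ k) / s2)"
      unfolding qf_def Ce by (simp add: algebra_simps sum_subtractf)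
    also have "(\<Sum>j\<in>UNIV. \<Sum>k\<in>UNIV. (v $ j * sx $ j) * (v $ k * sx $ k) / s2) = (\<Sum>j\<in>UNIV. v $ j * sx $ j)\<^sup>2 / s2"
      by (simp add: power2_eq_square sum_product sum_divide_distrib)
    finally show ?thesis .
  qed
  have psdC: "\<And>v. 0 \<le> qf C v"
  proof -
    fix v :: "real^'n"
    define p where "p = (\<Sum>j\<in>UNIV. v $ j * sx $ j)"
    have "qf Sig (v - (p / s2) *\<^sub>R x) = qf Sig v - 2 * (p / s2) * p + (p / s2)\<^sup>2 * s2"
      using qf_lin[OF symS, of v "p / s2" x] qfx by (simp add: p_def sx_def)
    also have "\<dots> = qf C v" unfolding qfC p_def[symmetric] using s2p by (simp add: power2_eq_square field_simps)
    finally show "0 \<le> qf C v" using psdS by metis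
  qed
  obtain N :: nat and V :: "nat \<Rightarrow> real^'n" where Np: "N > 0" and CV: "\<And>i j. C $ i $ j = (\<Sum>k<N. V k $ i * V k $ j)"
    using decomp_N[OF symC psdC] by metis
  have xV: "x \<bullet> V k = 0" if "k < N" for k
  proof -
    have "qf C x = 0" unfolding qfC qfx sxs using s2p by (simp add: power2_eq_square)
    then have "(\<Sum>k<N. (x \<bullet> V k)\<^sup>2) = 0" using qf_decomp[OF CV] by simp
    then have "(x \<bullet> V k)\<^sup>2 = 0" using that by (subst (asm) sum_nonneg_eq_0_iff) auto
    then show ?thesis by simp
  qed
  define A where "A = {..<N} \<times> (UNIV :: bool set)"
  have Af: "finite A" "A \<noteq> {}" using Np by (auto simp: A_def)
  have cA: "real (card A) = 2 * real N" unfolding A_def using W_facts(3)[of N] by simp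
  define PK where "PK = uniform_count_measure A"
  define M0 where "M0 = M01 \<Otimes>\<^sub>M PK"
  interpret P1: prob_space M01 by (rule prob_M01)
  interpret P2: prob_space PK unfolding PK_def by (rule prob_space_uniform_count_measure[OF Af])
  interpret PP: pair_prob_space M01 PK ..
  define bv where "bv = (- 1 / s2) *\<^sub>R sx"
  define Z where "Z u = Y u + xm" for u
  define R where "R p = mu + Z (fst p) *\<^sub>R bv + Wf N V (snd p)" for p
  have Zm: "Z \<in> borel_measurable M01" unfolding Z_def using Ym by simp
  have Yi: "integrable M01 Y"
  proof (rule Bochner_Integration.integrable_bound[where f="\<lambda>u. 1 + (Y u)\<^sup>2"])
    show "integrable M01 (\<lambda>u. 1 + (Y u)\<^sup>2)" using Y2 by simp
    show "AE u in M01. norm (Y u) \<le> norm (1 + (Y u)\<^sup>2)"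
      by (intro AE_I2) (simp add: abs_le_1_sq)
  qed (rule Ym)
  have Z2: "integrable M01 (\<lambda>u. (Z u)\<^sup>2)"
  proof -
    have "(\<lambda>u. (Z u)\<^sup>2) = (\<lambda>u. (Y u)\<^sup>2 + 2 * xm * Y u + xm\<^sup>2)"
      by (simp add: Z_def power2_eq_square algebra_simps)
    then show ?thesis using Y2 Yi by simp
  qed
  have Z1: "integral\<^sup>L M01 Z = 0" unfolding Z_def using Yi Ymean P1.prob_space by (simp add: xm_def)
  have Zs: "integral\<^sup>L M01 (\<lambda>u. (Z u)\<^sup>2) = s2" unfolding Z_def xm_def s2_def using Yvar .
  have Wm: "(\<lambda>p. Wf N V (snd p)) \<in> borel_measurable M0"
    unfolding M0_def PK_def by (rule measurable_compose[OF measurable_snd meas_ucm])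
  have Zfm: "(\<lambda>p. Z (fst p)) \<in> borel_measurable M0"
    unfolding M0_def by (rule measurable_compose[OF measurable_fst Zm])
  have Rm: "R \<in> borel_measurable M0"
    unfolding R_def using Wm Zfm by measurable
  define GR where "GR = distr M0 borel R"
  have PGR: "prob_space GR" unfolding GR_def M0_def
    by (rule prob_space.prob_space_distr[OF PP.prob_space_axioms]) (use Rm in \<open>simp add: M0_def\<close>)
  have intGR: "integral\<^sup>L GR h = integral\<^sup>L M0 (\<lambda>p. h (R p))" and iGR: "integrable GR h = integrable M0 (\<lambda>p. h (R p))"
    if "h \<in> borel_measurable borel" for h :: "real^'n \<Rightarrow> real"
    unfolding GR_def using integral_distr[OF Rm that] integrable_distr_eq[OF Rm that] by auto
  have Rc: "R (u, a) $ i = (mu $ i + Wf N V a $ i) + bv $ i * Z u" for u a i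
    by (simp add: R_def)
  have M0int: "integrable M0 F" "integral\<^sup>L M0 F = (\<Sum>a\<in>A. integral\<^sup>L M01 (\<lambda>u. F (u, a))) / card A"
    if "F \<in> borel_measurable M0" "\<And>a. a \<in> A \<Longrightarrow> integrable M01 (\<lambda>u. F (u, a))" for F
    using prod_int[OF Af, of F] that unfolding M0_def PK_def by auto
  note ZL = Zlin[OF Zm Z2 Z1 Zs]
  have coord: "(\<lambda>r::real^'n. r $ i) \<in> borel_measurable borel" for i
    by (intro borel_measurable_continuous_onI continuous_intros)
  have GRM: "GR \<in> Mset mu Sig"
    unfolding Mset_def
  proof (intro CollectI conjI allI)
    show "prob_space GR" by (rule PGR)
    show "sets GR = sets borel" by (simp add: GR_def)
    fix i
    show "integrable GR (\<lambda>r. (r $ i)\<^sup>2)"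
    proof (subst iGR)
      show "(\<lambda>r::real^'n. (r $ i)\<^sup>2) \<in> borel_measurable borel" using coord by measurable
      show "integrable M0 (\<lambda>p. (R p $ i)\<^sup>2)"
      proof (rule M0int(1))
        show "(\<lambda>p. (R p $ i)\<^sup>2) \<in> borel_measurable M0" using Rm coord by measurable
        fix a show "integrable M01 (\<lambda>u. (R (u, a) $ i)\<^sup>2)"
          unfolding Rc power2_eq_square by (rule ZL(1))
      qed
    qed
    have im: "integrable M01 (\<lambda>u. R (u, a) $ i)" for a unfolding Rc by (rule ZL(3))
    have "integral\<^sup>L GR (\<lambda>r. r $ i) = (\<Sum>a\<in>A. mu $ i + Wf N V a $ i) / card A"
      unfolding intGR[OF coord] M0int(2)[OF measurable_compose[OF Rm coord] im] Rc ZL(4) ..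
    also have "\<dots> = mu $ i" using Af cA W_facts(1)[of N V i] Np by (simp add: sum.distrib A_def)
    finally show "integral\<^sup>L GR (\<lambda>r. r $ i) = mu $ i" .
  next
    fix i j
    have hm: "(\<lambda>r::real^'n. (r $ i - mu $ i) * (r $ j - mu $ j)) \<in> borel_measurable borel"
      using coord by measurable
    have fib: "(\<lambda>u. (R (u, a) $ i - mu $ i) * (R (u, a) $ j - mu $ j)) = (\<lambda>u. (Wf N V a $ i + bv $ i * Z u) * (Wf N V a $ j + bv $ j * Z u))" for a
      unfolding Rc by simp
    have im: "integrable M01 (\<lambda>u. (R (u, a) $ i - mu $ i) * (R (u, a) $ j - mu $ j))" for a
      unfolding fib by (rule ZL(1))
    have "integral\<^sup>L GR (\<lambda>r. (r $ i - mu $ i) * (r $ j - mu $ j)) =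
        (\<Sum>a\<in>A. Wf N V a $ i * Wf N V a $ j + bv $ i * bv $ j * s2) / card A"
      unfolding intGR[OF hm] M0int(2)[OF measurable_compose[OF Rm hm] im] fib ZL(2) ..
    also have "\<dots> = (2 * real N * C $ i $ j + 2 * real N * (bv $ i * bv $ j * s2)) / (2 * real N)"
      unfolding cA using W_facts(2)[of N V i j] W_facts(3)[of N] CV[of i j] by (simp add: sum.distrib A_def)
    also have "\<dots> = C $ i $ j + bv $ i * bv $ j * s2" using Np by (simp add: field_simps)
    also have "\<dots> = Sig $ i $ j" unfolding Ce bv_def using s2p by (simp add: field_simps power2_eq_square)
    finally show "integral\<^sup>L GR (\<lambda>r. (r $ i - mu $ i) * (r $ j - mu $ j)) = Sig $ i $ j" .
  qed
  have loss: "- (x \<bullet> R p) = Y (fst p)" if "p \<in> space M0" for p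
  proof -
    have a: "snd p \<in> A" using that by (auto simp: M0_def PK_def space_pair_measure space_uniform_count_measure)
    have xW: "x \<bullet> Wf N V (snd p) = 0" using a xV by (auto simp: Wf_def A_def)
    have xb: "x \<bullet> bv = -1" unfolding bv_def using s2p by (simp add: s2_def sx_def)
    have "x \<bullet> R p = xm + Z (fst p) * (x \<bullet> bv) + x \<bullet> Wf N V (snd p)"
      by (simp add: R_def inner_add_right xm_def)
    then show ?thesis using xW xb by (simp add: Z_def)
  qed
  have "distr GR borel (\<lambda>r. - (x \<bullet> r)) = distr M0 borel ((\<lambda>r. - (x \<bullet> r)) \<circ> R)"
    unfolding GR_def by (rule distr_distr) (simp_all add: Rm)
  also have "\<dots> = distr M0 borel (Y \<circ> fst)"
    by (rule distr_cong) (simp_all add: loss)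
  also have "\<dots> = distr (distr M0 M01 fst) borel Y"
    by (rule distr_distr[symmetric]) (simp_all add: Ym M0_def)
  also have "distr M0 M01 fst = M01" unfolding M0_def by (rule P2.distr_pair_fst)
  finally show ?thesis using that GRM by blast
qed

locale setting =
  fixes g :: "real \<Rightarrow> real" and MF :: "real measure"
  assumes g_dist: "distortion g" and g_conc: "concave_on {0..1} g" and gA1: "A1 g"
    and F_dist: "real_distribution MF"
    and F_sq: "integrable MF (\<lambda>z. z\<^sup>2)"
    and F_mean: "(\<integral>z. z \<partial>MF) = 0"
    and F_var: "(\<integral>z. z\<^sup>2 \<partial>MF) = 1"
begin

abbreviation "f \<equiv> quantile (cdf MF)"
abbreviation "gm \<equiv> gam g"
definition gt :: "real \<Rightarrow> real" where "gt u = gam g u - 1"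

lemma cgg: "cg g"
  using g_conc g_dist unfolding distortion_def cg_def by auto

end

sublocale setting \<subseteq> cg g by (rule cgg)

context setting
begin

lemma f_meas: "f \<in> borel_measurable M01" and f_mono: "mono_on {0<..<1} f"
  using quantile_distr[OF F_dist] by auto

lemma F_int: "integrable MF (\<lambda>z. z)"
proof -
  interpret real_distribution MF by (rule F_dist)
  show ?thesis
  proof (rule Bochner_Integration.integrable_bound[where f="\<lambda>z. 1 + z\<^sup>2"])
    show "integrable MF (\<lambda>z. 1 + z\<^sup>2)" using F_sq by simp
    show "AE z in MF. norm z \<le> norm (1 + z\<^sup>2)" by (intro AE_I2) (simp add: abs_le_1_sq)
  qed simp
qed

lemma f_sq_int: "integrable M01 (\<lambda>u. (f u)\<^sup>2)" and f_int: "integrable M01 f"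
  and f_mean: "integral\<^sup>L M01 f = 0" and f_sq: "integral\<^sup>L M01 (\<lambda>u. (f u)\<^sup>2) = 1"
proof -
  have m2: "(\<lambda>z::real. z\<^sup>2) \<in> borel_measurable borel" by simp
  have m1: "(\<lambda>z::real. z) \<in> borel_measurable borel" by simp
  show "integrable M01 (\<lambda>u. (f u)\<^sup>2)" using quantile_integral(1)[OF F_dist m2] F_sq by simp
  show "integral\<^sup>L M01 (\<lambda>u. (f u)\<^sup>2) = 1" using quantile_integral(2)[OF F_dist m2] F_var by simp
  show "integrable M01 f" using quantile_integral(1)[OF F_dist m1] F_int by simp
  show "integral\<^sup>L M01 f = 0" using quantile_integral(2)[OF F_dist m1] F_mean by simp
qed

lemma f_sign: "u \<in> {0<..<1} \<Longrightarrow> f u \<le> 0 \<longleftrightarrow> u \<le> cdf MF 0"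
proof -
  interpret cdf_distribution MF using F_dist by (simp add: cdf_distribution_def)
  assume "u \<in> {0<..<1}"
  then show ?thesis using pseudoinverse[of u 0] by (simp add: quantile_def)
qed

lemma gm_meas: "gm \<in> borel_measurable M01" and gm_mono: "mono_on {0<..<1} gm"
  and gm_nonneg: "u \<in> {0<..<1} \<Longrightarrow> 0 \<le> gm u"
  using gam_meas gam_mono gam_nonneg by auto

lemma gm_sq_int: "integrable M01 (\<lambda>u. (gm u)\<^sup>2)"
  using gA1 unfolding A1_def set_integrable_M01 by simp

lemma gm_int: "integrable M01 gm"
proof (rule Bochner_Integration.integrable_bound[where f="\<lambda>u. 1 + (gm u)\<^sup>2"])
  interpret prob_space M01 by (rule prob_M01)
  show "integrable M01 (\<lambda>u. 1 + (gm u)\<^sup>2)" using gm_sq_int by simp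
  show "AE u in M01. norm (gm u) \<le> norm (1 + (gm u)\<^sup>2)" by (intro AE_I2) (simp add: abs_le_1_sq)
qed (rule gm_meas)

lemma gm_mean: "integral\<^sup>L M01 gm = 1"
  using gam_integral[OF gm_int] g_dist gA1 unfolding distortion_def A1_def by auto

lemma gt_meas: "gt \<in> borel_measurable M01" unfolding gt_def[abs_def] using gm_meas by simp

lemma gt_mono: "mono_on {0<..<1} gt"
  using gm_mono unfolding gt_def mono_on_def by auto

lemma gt_sq_int: "integrable M01 (\<lambda>u. (gt u)\<^sup>2)"
proof -
  interpret prob_space M01 by (rule prob_M01)
  have "(\<lambda>u. (gt u)\<^sup>2) = (\<lambda>u. (gm u)\<^sup>2 - 2 * gm u + 1)" by (simp add: gt_def power2_eq_square algebra_simps)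
  then show ?thesis using gm_sq_int gm_int by simp
qed

lemma gt_mean: "integral\<^sup>L M01 gt = 0"
proof -
  interpret prob_space M01 by (rule prob_M01)
  show ?thesis unfolding gt_def[abs_def] using gm_int gm_mean prob_space by simp
qed

lemma gt_sq: "integral\<^sup>L M01 (\<lambda>u. (gt u)\<^sup>2) = var01 gm"
proof -
  interpret prob_space M01 by (rule prob_M01)
  have "(\<lambda>u. (gt u)\<^sup>2) = (\<lambda>u. (gm u)\<^sup>2 - 2 * gm u + 1)" by (simp add: gt_def power2_eq_square algebra_simps)
  then have "integral\<^sup>L M01 (\<lambda>u. (gt u)\<^sup>2) = integral\<^sup>L M01 (\<lambda>u. (gm u)\<^sup>2) - 2 * 1 + 1"
    using gm_sq_int gm_int gm_mean prob_space by simp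
  then show ?thesis unfolding var01_def LINT_M01 gm_mean by simp
qed

end

context setting
begin

lemma fgm_int: "integrable M01 (\<lambda>u. f u * gm u)"
  by (rule sq_integrable_prod[OF f_meas gm_meas f_sq_int gm_sq_int])

lemma fgm_nonneg: "0 \<le> integral\<^sup>L M01 (\<lambda>u. f u * gm u)"
proof -
  interpret P: prob_space M01 by (rule prob_M01)
  define u0 where "u0 = cdf MF 0"
  have sgn: "u \<in> {0<..<1} \<Longrightarrow> f u \<le> 0 \<longleftrightarrow> u \<le> u0" for u using f_sign by (simp add: u0_def)
  consider "u0 \<le> 0" | "u0 \<ge> 1" | "0 < u0 \<and> u0 < 1" by linarith
  then show ?thesis
  proof cases
    case 1
    have "0 \<le> f u * gm u" if "u \<in> space M01" for u
    proof -
      have "\<not> f u \<le> 0" using sgn[of u] that 1 by auto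
      then show ?thesis using gm_nonneg[of u] that by simp
    qed
    then show ?thesis by (rule Bochner_Integration.integral_nonneg)
  next
    case 2
    have fn: "f u \<le> 0" if "u \<in> space M01" for u using sgn[of u] that 2 by auto
    have "integral\<^sup>L M01 (\<lambda>u. - f u) = 0" using f_mean by simp
    moreover have "integrable M01 (\<lambda>u. - f u)" using f_int by simp
    moreover have "AE u in M01. 0 \<le> - f u" using fn by (intro AE_I2) simp
    ultimately have "AE u in M01. - f u = 0" using integral_nonneg_eq_0_iff_AE by blast
    then have "AE u in M01. (f u)\<^sup>2 = 0" by eventually_elim simp
    then have "integral\<^sup>L M01 (\<lambda>u. (f u)\<^sup>2) = integral\<^sup>L M01 (\<lambda>u. 0)"
      by (intro integral_cong_AE) (use f_meas in simp_all)
    then show ?thesis using f_sq by simp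
  next
    case 3
    define K where "K = gm u0"
    have pw: "0 \<le> f u * (gm u - K)" if "u \<in> space M01" for u
    proof (cases "u \<le> u0")
      case True
      then have "f u \<le> 0" using sgn[of u] that by auto
      moreover have "gm u \<le> K" unfolding K_def using True that 3 by (intro mono_onD[OF gm_mono]) auto
      ultimately show ?thesis by (simp add: mult_nonpos_nonpos)
    next
      case False
      then have "\<not> f u \<le> 0" using sgn[of u] that by auto
      moreover have "K \<le> gm u" unfolding K_def using False that 3 by (intro mono_onD[OF gm_mono]) auto
      ultimately show ?thesis by simp
    qed
    have "0 \<le> integral\<^sup>L M01 (\<lambda>u. f u * (gm u - K))" using pw by (rule Bochner_Integration.integral_nonneg)
    also have "integral\<^sup>L M01 (\<lambda>u. f u * (gm u - K)) = integral\<^sup>L M01 (\<lambda>u. f u * gm u) - K * integral\<^sup>L M01 f"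
      using fgm_int f_int by (simp add: right_diff_distrib)
    finally show ?thesis using f_mean by simp
  qed
qed

lemma fgt_eq: "integral\<^sup>L M01 (\<lambda>u. f u * gt u) = integral\<^sup>L M01 (\<lambda>u. f u * gm u)"
  using fgm_int f_int f_mean by (simp add: gt_def right_diff_distrib)

lemma var_f: "var01 f = 1" unfolding var01_def LINT_M01 f_sq f_mean by simp

lemma c0_facts:
  shows "0 \<le> corr01 f gm" "corr01 f gm \<le> 1"
    "integral\<^sup>L M01 (\<lambda>u. f u * gt u) = corr01 f gm * sqrt (var01 gm)"
proof -
  define \<kappa> where "\<kappa> = integral\<^sup>L M01 (\<lambda>u. f u * gt u)"
  define V where "V = var01 gm"
  have k0: "0 \<le> \<kappa>" unfolding \<kappa>_def fgt_eq by (rule fgm_nonneg)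
  have V0: "0 \<le> V" unfolding V_def gt_sq[symmetric] by simp
  have cs: "\<kappa>\<^sup>2 \<le> V" unfolding \<kappa>_def V_def gt_sq[symmetric]
    using cauchy_schwarz_int[OF f_meas gt_meas f_sq_int gt_sq_int] f_sq by simp
  have kV: "\<kappa> \<le> sqrt V" using cs k0 by (metis real_le_rsqrt)
  have c: "corr01 f gm = \<kappa> / sqrt V"
    unfolding corr01_def cov01_def var_f LINT_M01 f_mean V_def \<kappa>_def fgt_eq by simp
  show "0 \<le> corr01 f gm" unfolding c using k0 V0 by simp
  show "corr01 f gm \<le> 1" unfolding c using kV V0
    by (cases "V = 0") (simp_all add: divide_le_eq)
  show "integral\<^sup>L M01 (\<lambda>u. f u * gt u) = corr01 f gm * sqrt (var01 gm)"
  proof (cases "V = 0")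
    case True
    then have "\<kappa> = 0" using cs k0 by simp
    then show ?thesis unfolding c using True by (simp add: \<kappa>_def V_def)
  next
    case False
    then show ?thesis unfolding c using V0 by (simp add: \<kappa>_def V_def)
  qed
qed

end

lemma sq_int_imp_int:
  fixes h :: "real \<Rightarrow> real"
  assumes "h \<in> borel_measurable M01" "integrable M01 (\<lambda>u. (h u)\<^sup>2)"
  shows "integrable M01 h"
proof (rule Bochner_Integration.integrable_bound[where f="\<lambda>u. 1 + (h u)\<^sup>2"])
  interpret prob_space M01 by (rule prob_M01)
  show "integrable M01 (\<lambda>u. 1 + (h u)\<^sup>2)" using assms by simp
  show "AE u in M01. norm (h u) \<le> norm (1 + (h u)\<^sup>2)" by (intro AE_I2) (simp add: abs_le_1_sq)
qed (rule assms(1))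

lemma sigma_sq:
  assumes "sigma_x Sig x > 0"
  shows "(sigma_x Sig x)\<^sup>2 = x \<bullet> (Sig *v x)"
proof -
  have "x \<bullet> (Sig *v x) > 0" using assms unfolding sigma_x_def by (metis real_sqrt_gt_0_iff)
  then show ?thesis unfolding sigma_x_def by simp
qed

context setting
begin

lemma Hg_decomp:
  fixes q :: "real \<Rightarrow> real"
  assumes qm: "q \<in> borel_measurable M01" and q2: "integrable M01 (\<lambda>u. (q u)\<^sup>2)"
    and q1: "integral\<^sup>L M01 q = 0"
  shows "integral\<^sup>L M01 (\<lambda>u. gm u * (q u + m)) = integral\<^sup>L M01 (\<lambda>u. gt u * q u) + m"
proof -
  interpret P: prob_space M01 by (rule prob_M01)
  have qi: "integrable M01 q" by (rule sq_int_imp_int[OF qm q2])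
  have gti: "integrable M01 gt" by (rule sq_int_imp_int[OF gt_meas gt_sq_int])
  have gq: "integrable M01 (\<lambda>u. gt u * q u)" by (rule sq_integrable_prod[OF gt_meas qm gt_sq_int q2])
  have "(\<lambda>u. gm u * (q u + m)) = (\<lambda>u. gt u * q u + m * gt u + q u + m)"
    by (simp add: gt_def algebra_simps)
  then show ?thesis using gq gti qi q1 gt_mean P.prob_space by simp
qed

lemma upper_x:
  fixes mu x :: "real^'n" and Sig :: "real^'n^'n" and GR :: "(real^'n) measure"
  assumes sp: "sigma_x Sig x > 0" and ep: "e > 0" and GR: "GR \<in> Mset mu Sig"
    and dw: "dWq (ref_quantile MF mu Sig x) (quantile (loss_cdf GR x)) \<le> sqrt e"
  defines "el \<equiv> min e (2 * (sigma_x Sig x)\<^sup>2 * (1 - corr01 f gm))"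
  shows "Hg g (loss_cdf GR x) \<le> - mu_x mu x
     + (sigma_x Sig x - el / (2 * sigma_x Sig x)) * sqrt (var01 gm) * corr01 f gm
     + sqrt (el - el\<^sup>2 / (4 * (sigma_x Sig x)\<^sup>2)) * sqrt (var01 gm * (1 - (corr01 f gm)\<^sup>2))"
proof -
  note mom = Mset_moments(1-2)[OF GR] Mset_moments(3-7)[OF GR, of x]
  interpret PG: prob_space GR by (rule mom(1))
  define L where "L r = - (x \<bullet> r)" for r :: "real^'n"
  have Lm: "L \<in> borel_measurable GR" unfolding L_def[abs_def] by (rule mom(3))
  define N where "N = distr GR borel L"
  have RN: "real_distribution N" unfolding N_def using Lm by simp
  have lc: "loss_cdf GR x = cdf N" unfolding loss_cdf_def N_def L_def[abs_def] ..
  define Q where "Q = quantile (cdf N)"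
  note qd = quantile_distr[OF RN, folded Q_def]
  have QI: "integrable M01 (\<lambda>u. h (Q u)) = integrable GR (\<lambda>r. h (L r))"
    and QE: "integral\<^sup>L M01 (\<lambda>u. h (Q u)) = integral\<^sup>L GR (\<lambda>r. h (L r))"
    if "h \<in> borel_measurable borel" for h :: "real \<Rightarrow> real"
    using quantile_integral[OF RN that, folded Q_def] integrable_distr_eq[OF Lm that] integral_distr[OF Lm that]
    unfolding N_def by auto
  define xm where "xm = x \<bullet> mu"
  define \<sigma> where "\<sigma> = sigma_x Sig x"
  have s2: "\<sigma>\<^sup>2 = x \<bullet> (Sig *v x)" unfolding \<sigma>_def by (rule sigma_sq[OF sp])
  define q where "q u = Q u + xm" for u
  have qm: "q \<in> borel_measurable M01" unfolding q_def[abs_def] using qd(2) by simp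
  have q2i: "integrable M01 (\<lambda>u. (q u)\<^sup>2)"
    unfolding q_def using QI[of "\<lambda>z. (z + xm)\<^sup>2"] mom(4,5)
  proof -
    have "integrable GR (\<lambda>r. (L r + xm)\<^sup>2)"
    proof -
      have "(\<lambda>r. (L r + xm)\<^sup>2) = (\<lambda>r. (- (x \<bullet> r))\<^sup>2 + 2 * xm * (- (x \<bullet> r)) + xm\<^sup>2)"
        by (simp add: L_def power2_eq_square algebra_simps)
      then show ?thesis using mom(4,5) by simp
    qed
    then show "integrable M01 (\<lambda>u. (Q u + xm)\<^sup>2)" using QI[of "\<lambda>z. (z + xm)\<^sup>2"] by simp
  qed
  have q2: "integral\<^sup>L M01 (\<lambda>u. (q u)\<^sup>2) = \<sigma>\<^sup>2"
    unfolding q_def s2 using QE[of "\<lambda>z. (z + xm)\<^sup>2"] mom(7) by (simp add: L_def xm_def)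
  have q1: "integral\<^sup>L M01 q = 0"
  proof -
    interpret P: prob_space M01 by (rule prob_M01)
    have Qi: "integrable M01 Q" using QI[of "\<lambda>z. z"] mom(5) by (simp add: L_def)
    have "integral\<^sup>L M01 Q = - xm" using QE[of "\<lambda>z. z"] mom(6) by (simp add: L_def xm_def)
    then show ?thesis unfolding q_def[abs_def] using Qi P.prob_space by simp
  qed
  have dist: "integral\<^sup>L M01 (\<lambda>u. (q u - \<sigma> * f u)\<^sup>2) \<le> e"
  proof -
    have "sqrt (integral\<^sup>L M01 (\<lambda>u. (ref_quantile MF mu Sig x u - Q u)\<^sup>2)) \<le> sqrt e"
      using dw unfolding dWq_def LINT_M01 lc Q_def .
    then have "integral\<^sup>L M01 (\<lambda>u. (ref_quantile MF mu Sig x u - Q u)\<^sup>2) \<le> e" by simp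
    moreover have "(\<lambda>u. (ref_quantile MF mu Sig x u - Q u)\<^sup>2) = (\<lambda>u. (q u - \<sigma> * f u)\<^sup>2)"
      by (simp add: ref_quantile_def q_def mu_x_def xm_def \<sigma>_def power2_eq_square algebra_simps)
    ultimately show ?thesis by simp
  qed
  note cf = c0_facts
  have U: "integral\<^sup>L M01 (\<lambda>u. gt u * q u) \<le> (\<sigma> - el / (2 * \<sigma>)) * sqrt (var01 gm) * corr01 f gm
      + sqrt (el - el\<^sup>2 / (4 * \<sigma>\<^sup>2)) * sqrt (var01 gm * (1 - (corr01 f gm)\<^sup>2))"
    unfolding el_def \<sigma>_def[symmetric]
    by (rule upper_core[OF f_meas gt_meas qm f_sq_int gt_sq_int q2i f_sq gt_sq cf(3) cf(1) cf(2) q2 _ ep dist])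
      (use sp in \<open>simp add: \<sigma>_def\<close>)
  have "Hg g (loss_cdf GR x) = integral\<^sup>L M01 (\<lambda>u. gm u * (q u + (- xm)))"
    unfolding Hg_def LINT_M01 lc Q_def[symmetric] q_def by simp
  also have "\<dots> = integral\<^sup>L M01 (\<lambda>u. gt u * q u) + (- xm)" by (rule Hg_decomp[OF qm q2i q1])
  finally show ?thesis using U by (simp add: mu_x_def xm_def \<sigma>_def)
qed

end

context setting
begin

lemma lower_x:
  fixes mu x :: "real^'n" and Sig :: "real^'n^'n"
  assumes sym: "transpose Sig = Sig" and psd: "\<forall>v. 0 \<le> v \<bullet> (Sig *v v)"
    and sp: "sigma_x Sig x > 0" and ep: "e > 0"
  defines "el \<equiv> min e (2 * (sigma_x Sig x)\<^sup>2 * (1 - corr01 f gm))"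
  obtains GR where "GR \<in> Mset mu Sig"
    "dWq (ref_quantile MF mu Sig x) (quantile (loss_cdf GR x)) \<le> sqrt e"
    "Hg g (loss_cdf GR x) = - mu_x mu x
     + (sigma_x Sig x - el / (2 * sigma_x Sig x)) * sqrt (var01 gm) * corr01 f gm
     + sqrt (el - el\<^sup>2 / (4 * (sigma_x Sig x)\<^sup>2)) * sqrt (var01 gm * (1 - (corr01 f gm)\<^sup>2))"
proof -
  interpret P: prob_space M01 by (rule prob_M01)
  define \<sigma> where "\<sigma> = sigma_x Sig x"
  define xm where "xm = x \<bullet> mu"
  have s2: "\<sigma>\<^sup>2 = x \<bullet> (Sig *v x)" unfolding \<sigma>_def by (rule sigma_sq[OF sp])
  have sp': "\<sigma> > 0" using sp by (simp add: \<sigma>_def)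
  note cf = c0_facts
  obtain \<alpha> \<beta> where ab: "0 \<le> \<alpha>" "0 \<le> \<beta>"
    and W2v: "integral\<^sup>L M01 (\<lambda>u. (\<alpha> * f u + \<beta> * gt u)\<^sup>2) = \<sigma>\<^sup>2"
    and Wd: "integral\<^sup>L M01 (\<lambda>u. (\<alpha> * f u + \<beta> * gt u - \<sigma> * f u)\<^sup>2) \<le> e"
    and Wg: "integral\<^sup>L M01 (\<lambda>u. gt u * (\<alpha> * f u + \<beta> * gt u)) =
      (\<sigma> - el / (2 * \<sigma>)) * sqrt (var01 gm) * corr01 f gm
      + sqrt (el - el\<^sup>2 / (4 * \<sigma>\<^sup>2)) * sqrt (var01 gm * (1 - (corr01 f gm)\<^sup>2))"
    using lower_core[OF f_meas gt_meas f_sq_int gt_sq_int f_sq gt_sq cf(3) cf(1) cf(2) sp' ep]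
    unfolding el_def \<sigma>_def by blast
  define W where "W u = \<alpha> * f u + \<beta> * gt u" for u
  define Y where "Y u = W u + (- xm)" for u
  have Wm: "W \<in> borel_measurable M01" unfolding W_def[abs_def] by (rule sq2(3)[OF f_meas gt_meas f_sq_int gt_sq_int])
  have W2: "integrable M01 (\<lambda>u. (W u)\<^sup>2)" unfolding W_def by (rule sq2(2)[OF f_meas gt_meas f_sq_int gt_sq_int])
  have Wi: "integrable M01 W" by (rule sq_int_imp_int[OF Wm W2])
  have W1: "integral\<^sup>L M01 W = 0"
  proof -
    have gti: "integrable M01 gt" by (rule sq_int_imp_int[OF gt_meas gt_sq_int])
    show ?thesis unfolding W_def[abs_def] using f_int gti f_mean gt_mean by simp
  qed
  have Ym: "Y \<in> borel_measurable M01" unfolding Y_def[abs_def] using Wm by simp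
  have Y2: "integrable M01 (\<lambda>u. (Y u)\<^sup>2)"
  proof -
    have "(\<lambda>u. (Y u)\<^sup>2) = (\<lambda>u. (W u)\<^sup>2 - 2 * xm * W u + xm\<^sup>2)" by (simp add: Y_def power2_eq_square algebra_simps)
    then show ?thesis using W2 Wi by simp
  qed
  have Ymean: "integral\<^sup>L M01 Y = - (x \<bullet> mu)"
    unfolding Y_def[abs_def] using Wi W1 P.prob_space by (simp add: xm_def)
  have Yvar: "integral\<^sup>L M01 (\<lambda>u. (Y u + x \<bullet> mu)\<^sup>2) = x \<bullet> (Sig *v x)"
    unfolding Y_def xm_def[symmetric] s2[symmetric] using W2v by (simp add: W_def)
  have spx: "x \<bullet> (Sig *v x) > 0" using s2 sp' by (metis zero_less_power)
  obtain GR where GR: "GR \<in> Mset mu Sig" and dGR: "distr GR borel (\<lambda>r. - (x \<bullet> r)) = distr M01 borel Y"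
    by (rule construct[OF sym psd spx Ym Y2 Ymean Yvar])
  have lc: "loss_cdf GR x = cdf (distr M01 borel Y)" unfolding loss_cdf_def dGR ..
  have Ymono: "mono_on {0<..<1} Y"
  proof (rule mono_onI)
    fix u v :: real assume uv: "u \<in> {0<..<1}" "v \<in> {0<..<1}" "u \<le> v"
    have "\<alpha> * f u \<le> \<alpha> * f v" using ab(1) mono_onD[OF f_mono uv] by (rule mult_left_mono[rotated])
    moreover have "\<beta> * gt u \<le> \<beta> * gt v" using ab(2) mono_onD[OF gt_mono uv] by (rule mult_left_mono[rotated])
    ultimately show "Y u \<le> Y v" by (simp add: Y_def W_def)
  qed
  define Qq where "Qq = quantile (cdf (distr M01 borel Y))"
  have RD: "real_distribution (distr M01 borel Y)" using Ym by simp
  have Qm: "Qq \<in> borel_measurable M01" unfolding Qq_def by (rule quantile_distr(2)[OF RD])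
  have AEq: "AE u in M01. Qq u = Y u" unfolding Qq_def by (rule quantile_mono_fun_AE[OF Ymono])
  have refm: "ref_quantile MF mu Sig x \<in> borel_measurable M01"
    unfolding ref_quantile_def[abs_def] using f_meas by simp
  show ?thesis
  proof (rule that[OF GR])
    have "integral\<^sup>L M01 (\<lambda>u. (ref_quantile MF mu Sig x u - Qq u)\<^sup>2) = integral\<^sup>L M01 (\<lambda>u. (ref_quantile MF mu Sig x u - Y u)\<^sup>2)"
      using AEq by (intro integral_cong_AE) (use Qm Ym refm in simp_all, auto elim: AE_mp)
    also have "(\<lambda>u. (ref_quantile MF mu Sig x u - Y u)\<^sup>2) = (\<lambda>u. (\<alpha> * f u + \<beta> * gt u - \<sigma> * f u)\<^sup>2)"
      by (simp add: ref_quantile_def Y_def W_def mu_x_def xm_def \<sigma>_def power2_eq_square algebra_simps)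
    finally have "integral\<^sup>L M01 (\<lambda>u. (ref_quantile MF mu Sig x u - Qq u)\<^sup>2) \<le> e" using Wd by simp
    then show "dWq (ref_quantile MF mu Sig x) (quantile (loss_cdf GR x)) \<le> sqrt e"
      unfolding dWq_def LINT_M01 lc Qq_def[symmetric] by simp
    have "Hg g (loss_cdf GR x) = integral\<^sup>L M01 (\<lambda>u. gm u * Qq u)"
      unfolding Hg_def LINT_M01 lc Qq_def ..
    also have "\<dots> = integral\<^sup>L M01 (\<lambda>u. gm u * (W u + (- xm)))"
      using AEq by (intro integral_cong_AE) (use Qm Wm gm_meas in \<open>simp_all add: Y_def\<close>, auto elim: AE_mp simp: Y_def)
    also have "\<dots> = integral\<^sup>L M01 (\<lambda>u. gt u * W u) + (- xm)" by (rule Hg_decomp[OF Wm W2 W1])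
    finally show "Hg g (loss_cdf GR x) = - mu_x mu x
     + (sigma_x Sig x - el / (2 * sigma_x Sig x)) * sqrt (var01 gm) * corr01 f gm
     + sqrt (el - el\<^sup>2 / (4 * (sigma_x Sig x)\<^sup>2)) * sqrt (var01 gm * (1 - (corr01 f gm)\<^sup>2))"
      using Wg unfolding W_def[symmetric] by (simp add: mu_x_def xm_def \<sigma>_def)
  qed
qed

end

context setting
begin

lemma robust_eq:
  fixes mu x :: "real^'n" and Sig :: "real^'n^'n"
  assumes sym: "transpose Sig = Sig" and psd: "\<forall>v. 0 \<le> v \<bullet> (Sig *v v)"
    and sp: "sigma_x Sig x > 0" and ep: "e > 0"
  defines "el \<equiv> min e (2 * (sigma_x Sig x)\<^sup>2 * (1 - corr01 f gm))"
  shows "robust_risk g MF mu Sig e x = ereal (- mu_x mu x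
     + (sigma_x Sig x - el / (2 * sigma_x Sig x)) * sqrt (var01 gm) * corr01 f gm
     + sqrt (el - el\<^sup>2 / (4 * (sigma_x Sig x)\<^sup>2)) * sqrt (var01 gm * (1 - (corr01 f gm)\<^sup>2)))"
    (is "_ = ereal ?r")
proof -
  let ?S = "{GR \<in> Mset mu Sig. dWq (ref_quantile MF mu Sig x) (quantile (loss_cdf GR x)) \<le> sqrt e}"
  have "robust_risk g MF mu Sig e x = (SUP GR\<in>?S. ereal (Hg g (loss_cdf GR x)))"
    unfolding robust_risk_def ..
  also have "\<dots> = ereal ?r"
  proof (rule antisym)
    show "(SUP GR\<in>?S. ereal (Hg g (loss_cdf GR x))) \<le> ereal ?r"
    proof (rule SUP_least)
      fix GR assume "GR \<in> ?S"
      then show "ereal (Hg g (loss_cdf GR x)) \<le> ereal ?r"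
        using upper_x[OF sp ep, of GR mu] unfolding el_def by auto
    qed
    obtain GR where GR: "GR \<in> Mset mu Sig"
      "dWq (ref_quantile MF mu Sig x) (quantile (loss_cdf GR x)) \<le> sqrt e"
      "Hg g (loss_cdf GR x) = ?r"
      using lower_x[OF sym psd sp ep, of mu] unfolding el_def by blast
    show "ereal ?r \<le> (SUP GR\<in>?S. ereal (Hg g (loss_cdf GR x)))"
      by (rule SUP_upper2[of GR]) (use GR in auto)
  qed
  finally show ?thesis .
qed

end

theorem proposition4:
  fixes g :: "real \<Rightarrow> real" and MF :: "real measure"
    and mu :: "real^'n" and Sig :: "real^'n^'n"
    and P :: "(real^'n) set" and eps :: "real^'n \<Rightarrow> real"
  assumes g_dist: "distortion g" and g_conc: "concave_on {0..1} g"
    and gA1: "A1 g" and gA2: "A2 g"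
    and F_dist: "real_distribution MF"
    and F_sq: "integrable MF (\<lambda>z. z\<^sup>2)"
    and F_mean: "(\<integral>z. z \<partial>MF) = 0"
    and F_var: "(\<integral>z. z\<^sup>2 \<partial>MF) = 1"
    and Sig_sym: "transpose Sig = Sig"
    and Sig_psd: "\<forall>v. 0 \<le> v \<bullet> (Sig *v v)"
    and P_poly: "polyhedron P"
    and P_sig: "\<forall>x\<in>P. sigma_x Sig x > 0"
    and eps_pos: "\<forall>x\<in>P. eps x > 0"
  defines "V \<equiv> var01 (gam g)"
    and "c0 \<equiv> corr01 (quantile (cdf MF)) (gam g)"
  defines "eps_low \<equiv> (\<lambda>x. min (eps x) (2 * (sigma_x Sig x)\<^sup>2 * (1 - c0)))"
  defines "rhs \<equiv> (\<lambda>x. - mu_x mu x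
              + (sigma_x Sig x - eps_low x / (2 * sigma_x Sig x)) * sqrt V * c0
              + sqrt (eps_low x - (eps_low x)\<^sup>2 / (4 * (sigma_x Sig x)\<^sup>2)) * sqrt (V * (1 - c0\<^sup>2)))"
  shows "(\<forall>x\<in>P. robust_risk g MF mu Sig (eps x) x = ereal (rhs x)) \<and>
         {x\<in>P. \<forall>y\<in>P. robust_risk g MF mu Sig (eps x) x \<le> robust_risk g MF mu Sig (eps y) y}
           = {x\<in>P. \<forall>y\<in>P. rhs x \<le> rhs y}"
proof -
  have st: "setting g MF" unfolding setting_def
    using g_dist g_conc gA1 F_dist F_sq F_mean F_var by blast
  interpret setting g MF by (rule st)
  have R: "robust_risk g MF mu Sig (eps x) x = ereal (rhs x)" if "x \<in> P" for x
    unfolding rhs_def eps_low_def c0_def V_def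
    by (rule robust_eq[OF Sig_sym Sig_psd]) (use that P_sig eps_pos in auto)
  show ?thesis
  proof
    show "\<forall>x\<in>P. robust_risk g MF mu Sig (eps x) x = ereal (rhs x)" using R by blast
    show "{x\<in>P. \<forall>y\<in>P. robust_risk g MF mu Sig (eps x) x \<le> robust_risk g MF mu Sig (eps y) y}
           = {x\<in>P. \<forall>y\<in>P. rhs x \<le> rhs y}"
      using R by auto
  qed
qed

end
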